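(* Consider the MTGC algorithm described in the context. Suppose (A1) and (A2) hold and $\gamma\le\frac1{8HL}$. Then for every global round $t$, $$Q_t\le24\gamma^2H^2L^2D_t+12\gamma^2H^2\sum_{e=0}^{E-1}\frac1N\sum_{j=1}^NZ_j^{t,e}+12\gamma^2H^2\sum_{e=0}^{E-1}\frac1N\sum_{j=1}^NY_j^{t,e}+24\gamma^2H^2\sum_{e=0}^{E-1}\mathbb E\|\nabla f(\hat{\boldsymbol x}^{t,e})\|^2+3EH\gamma^2\sigma^2.$$
   Context: Setting: $N$ groups; group $j$ has a set $\mathcal C_j$ of $n_j\ge1$ clients, sets pairwise disjoint. Client $i$ has distribution $\mathcal D_i$, stochastic loss $F_i(\boldsymbol x,\xi)$, $F_i(\boldsymbol x)=\mathbb E_{\xi\sim\mathcal D_i}F_i(\boldsymbol x,\xi)$; $f_j=\frac1{n_j}\sum_{i\in\mathcal C_j}F_i$, $f=\frac1N\sum_jf_j$. For client $i$, $j$ denotes its group. (A1): $\|\nabla F_i(\boldsymbol x)-\nabla F_i(\boldsymbol y)\|\le L\|\boldsymbol x-\boldsymbol y\|$ for all $\boldsymbol x,\boldsymbol y,i$. (A2): $\mathbb E_{\xi\sim\mathcal D_i}\nabla F_i(\boldsymbol x,\xi)=\nabla F_i(\boldsymbol x)$ and $\mathbb E_{\xi\sim\mathcal D_i}\|\nabla F_i(\boldsymbol x,\xi)-\nabla F_i(\boldsymbol x)\|^2\le\sigma^2$ for all $\boldsymbol x,i$. MTGC: initial $\bar{\boldsymbol x}^0$, integers $E,H\ge1$,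 $\gamma>0$; samples $\xi_{i,h}^{t,e}\sim\mathcal D_i$ fresh and independent of the past. $\boldsymbol y_j^0=-\frac1{n_j}\sum_{i\in\mathcal C_j}\nabla F_i(\bar{\boldsymbol x}^0,\xi_{i,0}^{0,0})+\frac1N\sum_{j'}\frac1{n_{j'}}\sum_{i\in\mathcal C_{j'}}\nabla F_i(\bar{\boldsymbol x}^0,\xi_{i,0}^{0,0})$. For each $t\ge0$: $\bar{\boldsymbol x}_j^{t,0}=\bar{\boldsymbol x}^t$; $\boldsymbol z_i^{t,0}=-\nabla F_i(\bar{\boldsymbol x}^t,\xi_{i,0}^{t,0})+\frac1{n_j}\sum_{i'\in\mathcal C_j}\nabla F_{i'}(\bar{\boldsymbol x}^t,\xi_{i',0}^{t,0})$; for $e=0,\dots,E-1$: $\boldsymbol x_{i,0}^{t,e}=\bar{\boldsymbol x}_j^{t,e}$, $\boldsymbol x_{i,h+1}^{t,e}=\boldsymbol x_{i,h}^{t,e}-\gamma(\nabla F_i(\boldsymbol x_{i,h}^{t,e},\xi_{i,h}^{t,e})+\boldsymbol z_i^{t,e}+\boldsymbol y_j^t)$ for $h=0,\dots,H-1$, $\bar{\boldsymbol x}_j^{t,e+1}=\frac1{n_j}\sum_{i\in\mathcal C_j}\boldsymbol x_{i,H}^{t,e}$, $\boldsymbol z_i^{t,e+1}=\boldsymbol z_i^{t,e}+\frac1{H\gamma}(\boldsymbol x_{i,H}^{t,e}-\bar{\boldsymbol x}_j^{t,e+1})$; then $\bar{\boldsymbol x}^{t+1}=\frac1N\sum_j\bar{\boldsymbol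 x}_j^{t,E}$, $\boldsymbol y_j^{t+1}=\boldsymbol y_j^t+\frac1{HE\gamma}(\bar{\boldsymbol x}_j^{t,E}-\bar{\boldsymbol x}^{t+1})$. $\mathbb E$ is over all randomness. Notation: $\hat{\boldsymbol x}^{t,e}=\frac1N\sum_j\bar{\boldsymbol x}_j^{t,e}$; $Z_j^{t,e}=\frac1{n_j}\sum_{i\in\mathcal C_j}\mathbb E\|\boldsymbol z_i^{t,e}+\nabla F_i(\bar{\boldsymbol x}_j^{t,e})-\nabla f_j(\bar{\boldsymbol x}_j^{t,e})\|^2$; $Y_j^{t,e}=\mathbb E\|\boldsymbol y_j^t+\nabla f_j(\hat{\boldsymbol x}^{t,e})-\nabla f(\hat{\boldsymbol x}^{t,e})\|^2$; $D_t=\sum_{e=0}^{E-1}\frac1N\sum_j\mathbb E\|\hat{\boldsymbol x}^{t,e}-\bar{\boldsymbol x}_j^{t,e}\|^2$; $Q_t=\sum_{e=0}^{E-1}\frac1{NH}\sum_j\frac1{n_j}\sum_{i\in\mathcal C_j}\sum_{h=0}^{H-1}\mathbb E\|\bar{\boldsymbol x}_j^{t,e}-\boldsymbol x_{i,h}^{t,e}\|^2$. *)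

theory Defs
  imports "HOL-Probability.Probability"
begin

definition gavg :: "(nat \<Rightarrow> nat set) \<Rightarrow> nat \<Rightarrow> (nat \<Rightarrow> 'a::real_vector) \<Rightarrow> 'a" where
  "gavg C j v = (1 / real (card (C j))) *\<^sub>R (\<Sum>i\<in>C j. v i)"

definition gmean :: "nat \<Rightarrow> (nat \<Rightarrow> 'a::real_vector) \<Rightarrow> 'a" where
  "gmean N v = (1 / real N) *\<^sub>R (\<Sum>j<N. v j)"

definition grp :: "nat \<Rightarrow> (nat \<Rightarrow> nat set) \<Rightarrow> nat \<Rightarrow> nat" where
  "grp N C i = (THE j. j < N \<and> i \<in> C j)"

text \<open>A sample path s i t e h is the sample xi_{i,h}^{t,e}.
  G i x xi is the stochastic gradient of F_i at x with sample xi.\<close>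

primrec local_iter ::
  "(nat \<Rightarrow> 'a::real_vector \<Rightarrow> 'b \<Rightarrow> 'a) \<Rightarrow> real \<Rightarrow> (nat \<Rightarrow> nat \<Rightarrow> nat \<Rightarrow> nat \<Rightarrow> 'b)
   \<Rightarrow> nat \<Rightarrow> nat \<Rightarrow> nat \<Rightarrow> 'a \<Rightarrow> 'a \<Rightarrow> 'a \<Rightarrow> nat \<Rightarrow> 'a" where
  "local_iter G \<gamma> s i t e x0 z y 0 = x0"
| "local_iter G \<gamma> s i t e x0 z y (Suc h) =
     (let x = local_iter G \<gamma> s i t e x0 z y h in x - \<gamma> *\<^sub>R (G i x (s i t e h) + z + y))"

text \<open>Within round t, starting from xbar^t = xt and y_j^t = y j: state after e group rounds,
  (group models xbar_j^{t,e}, client corrections z_i^{t,e}).\<close>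
primrec mtgc_epoch ::
  "(nat \<Rightarrow> 'a::real_vector \<Rightarrow> 'b \<Rightarrow> 'a) \<Rightarrow> real \<Rightarrow> nat \<Rightarrow> nat \<Rightarrow> (nat \<Rightarrow> nat set)
   \<Rightarrow> (nat \<Rightarrow> nat \<Rightarrow> nat \<Rightarrow> nat \<Rightarrow> 'b) \<Rightarrow> nat \<Rightarrow> 'a \<Rightarrow> (nat \<Rightarrow> 'a) \<Rightarrow> nat
   \<Rightarrow> (nat \<Rightarrow> 'a) \<times> (nat \<Rightarrow> 'a)" where
  "mtgc_epoch G \<gamma> H N C s t xt y 0 =
     (\<lambda>j. xt,
      \<lambda>i. - G i xt (s i t 0 0) + gavg C (grp N C i) (\<lambda>i'. G i' xt (s i' t 0 0)))"
| "mtgc_epoch G \<gamma> H N C s t xt y (Suc e) =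
     (let xb = fst (mtgc_epoch G \<gamma> H N C s t xt y e);
          z = snd (mtgc_epoch G \<gamma> H N C s t xt y e);
          xH = (\<lambda>i. local_iter G \<gamma> s i t e (xb (grp N C i)) (z i) (y (grp N C i)) H);
          xb' = (\<lambda>j. gavg C j xH)
      in (xb', \<lambda>i. z i + (1 / (real H * \<gamma>)) *\<^sub>R (xH i - xb' (grp N C i))))"

text \<open>Global state at round t: (xbar^t, y^t).\<close>
primrec mtgc_round ::
  "(nat \<Rightarrow> 'a::real_vector \<Rightarrow> 'b \<Rightarrow> 'a) \<Rightarrow> real \<Rightarrow> nat \<Rightarrow> nat \<Rightarrow> nat \<Rightarrow> (nat \<Rightarrow> nat set)
   \<Rightarrow> 'a \<Rightarrow> (nat \<Rightarrow> nat \<Rightarrow> nat \<Rightarrow> nat \<Rightarrow> 'b) \<Rightarrow> nat \<Rightarrow> 'a \<times> (nat \<Rightarrow> 'a)" where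
  "mtgc_round G \<gamma> H E N C x0 s 0 =
     (x0, \<lambda>j. - gavg C j (\<lambda>i. G i x0 (s i 0 0 0))
              + gmean N (\<lambda>j'. gavg C j' (\<lambda>i. G i x0 (s i 0 0 0))))"
| "mtgc_round G \<gamma> H E N C x0 s (Suc t) =
     (let x = fst (mtgc_round G \<gamma> H E N C x0 s t);
          y = snd (mtgc_round G \<gamma> H E N C x0 s t);
          xbE = fst (mtgc_epoch G \<gamma> H N C s t x y E);
          x' = gmean N xbE
      in (x', \<lambda>j. y j + (1 / (real H * real E * \<gamma>)) *\<^sub>R (xbE j - x')))"

definition xbar where "xbar G \<gamma> H E N C x0 s t = fst (mtgc_round G \<gamma> H E N C x0 s t)"
definition yv where "yv G \<gamma> H E N C x0 s t j = snd (mtgc_round G \<gamma> H E N C x0 s t) j"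
definition xbj where
  "xbj G \<gamma> H E N C x0 s t e j =
     fst (mtgc_epoch G \<gamma> H N C s t (xbar G \<gamma> H E N C x0 s t) (yv G \<gamma> H E N C x0 s t) e) j"
definition zv where
  "zv G \<gamma> H E N C x0 s t e i =
     snd (mtgc_epoch G \<gamma> H N C s t (xbar G \<gamma> H E N C x0 s t) (yv G \<gamma> H E N C x0 s t) e) i"
definition xloc where
  "xloc G \<gamma> H E N C x0 s t e i h =
     local_iter G \<gamma> s i t e (xbj G \<gamma> H E N C x0 s t e (grp N C i)) (zv G \<gamma> H E N C x0 s t e i)
       (yv G \<gamma> H E N C x0 s t (grp N C i)) h"
definition xhat where
  "xhat G \<gamma> H E N C x0 s t e = gmean N (\<lambda>j. xbj G \<gamma> H E N C x0 s t e j)"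

definition Ex :: "'w measure \<Rightarrow> ('w \<Rightarrow> real) \<Rightarrow> ennreal" where
  "Ex M X = (\<integral>\<^sup>+ \<omega>. ennreal (X \<omega>) \<partial>M)"


definition path :: "(nat \<Rightarrow> nat \<Rightarrow> nat \<Rightarrow> nat \<Rightarrow> 'w \<Rightarrow> 'b) \<Rightarrow> 'w \<Rightarrow> nat \<Rightarrow> nat \<Rightarrow> nat \<Rightarrow> nat \<Rightarrow> 'b" where
  "path \<xi> \<omega> = (\<lambda>i t e h. \<xi> i t e h \<omega>)"

definition grad_fj where "grad_fj gradF C j x = gavg C j (\<lambda>i. gradF i x)"
definition grad_f where "grad_f gradF N C x = gmean N (\<lambda>j. grad_fj gradF C j x)"

definition Dt where
  "Dt M \<xi> G \<gamma> H E N C x0 t =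
     (\<Sum>e<E. ennreal (1 / real N) * (\<Sum>j<N.
        Ex M (\<lambda>\<omega>. (norm (xhat G \<gamma> H E N C x0 (path \<xi> \<omega>) t e - xbj G \<gamma> H E N C x0 (path \<xi> \<omega>) t e j))\<^sup>2)))"

definition Qt where
  "Qt M \<xi> G \<gamma> H E N C x0 t =
     (\<Sum>e<E. ennreal (1 / (real N * real H)) * (\<Sum>j<N. ennreal (1 / real (card (C j))) *
        (\<Sum>i\<in>C j. \<Sum>h<H.
          Ex M (\<lambda>\<omega>. (norm (xbj G \<gamma> H E N C x0 (path \<xi> \<omega>) t e j - xloc G \<gamma> H E N C x0 (path \<xi> \<omega>) t e i h))\<^sup>2))))"

definition Zj where
  "Zj M \<xi> G gradF \<gamma> H E N C x0 t e j =
     ennreal (1 / real (card (C j))) * (\<Sum>i\<in>C j.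
        Ex M (\<lambda>\<omega>. (norm (zv G \<gamma> H E N C x0 (path \<xi> \<omega>) t e i
                 + gradF i (xbj G \<gamma> H E N C x0 (path \<xi> \<omega>) t e j)
                 - grad_fj gradF C j (xbj G \<gamma> H E N C x0 (path \<xi> \<omega>) t e j)))\<^sup>2))"

definition Yj where
  "Yj M \<xi> G gradF \<gamma> H E N C x0 t e j =
     Ex M (\<lambda>\<omega>. (norm (yv G \<gamma> H E N C x0 (path \<xi> \<omega>) t j
                 + grad_fj gradF C j (xhat G \<gamma> H E N C x0 (path \<xi> \<omega>) t e)
                 - grad_f gradF N C (xhat G \<gamma> H E N C x0 (path \<xi> \<omega>) t e)))\<^sup>2)"

end

theory Submission
  imports Defs
begin


lemma grp_eq:
  assumes disj: "\<And>j j'. j < N \<Longrightarrow> j' < N \<Longrightarrow> j \<noteq> j' \<Longrightarrow> C j \<inter> C j' = {}"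
    and "j < N" "i \<in> C j"
  shows "grp N C i = j"
  unfolding grp_def
proof (rule the_equality)
  show "j < N \<and> i \<in> C j" using assms by simp
  fix j' assume "j' < N \<and> i \<in> C j'"
  then show "j' = j" using disj[of j j'] assms by blast
qed

lemma grp_Cl:
  assumes disj: "\<And>j j'. j < N \<Longrightarrow> j' < N \<Longrightarrow> j \<noteq> j' \<Longrightarrow> C j \<inter> C j' = {}"
    and "i \<in> (\<Union>j<N. C j)"
  shows "grp N C i < N" "i \<in> C (grp N C i)"
  using assms grp_eq[OF disj] by auto

lemma meas_gavg:
  fixes v :: "'w \<Rightarrow> nat \<Rightarrow> 'a::euclidean_space"
  assumes "\<And>i. i \<in> C j \<Longrightarrow> (\<lambda>\<omega>. v \<omega> i) \<in> borel_measurable \<Omega>"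
  shows "(\<lambda>\<omega>. gavg C j (v \<omega>)) \<in> borel_measurable \<Omega>"
  unfolding gavg_def using assms
  by (intro borel_measurable_scaleR borel_measurable_const borel_measurable_sum) auto

lemma meas_gmean:
  fixes v :: "'w \<Rightarrow> nat \<Rightarrow> 'a::euclidean_space"
  assumes "\<And>j. j < N \<Longrightarrow> (\<lambda>\<omega>. v \<omega> j) \<in> borel_measurable \<Omega>"
  shows "(\<lambda>\<omega>. gmean N (v \<omega>)) \<in> borel_measurable \<Omega>"
  unfolding gmean_def using assms
  by (intro borel_measurable_scaleR borel_measurable_const borel_measurable_sum) auto

locale mctx =
  fixes G :: "nat \<Rightarrow> 'a::euclidean_space \<Rightarrow> 'b \<Rightarrow> 'a"
    and D :: "nat \<Rightarrow> 'b measure"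
    and N :: nat and C :: "nat \<Rightarrow> nat set"
    and \<Omega> :: "'w measure"
    and p :: "'w \<Rightarrow> nat \<Rightarrow> nat \<Rightarrow> nat \<Rightarrow> nat \<Rightarrow> 'b"
  assumes disj: "\<And>j j'. j < N \<Longrightarrow> j' < N \<Longrightarrow> j \<noteq> j' \<Longrightarrow> C j \<inter> C j' = {}"
    and Gm: "\<And>i. i \<in> (\<Union>j<N. C j) \<Longrightarrow> (\<lambda>(x, s). G i x s) \<in> borel_measurable (borel \<Otimes>\<^sub>M D i)"
    and pm: "\<And>i t e h. i \<in> (\<Union>j<N. C j) \<Longrightarrow> (\<lambda>\<omega>. p \<omega> i t e h) \<in> measurable \<Omega> (D i)"
begin

lemma mG:
  assumes i: "i \<in> (\<Union>j<N. C j)" and f: "f \<in> borel_measurable \<Omega>"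
  shows "(\<lambda>\<omega>. G i (f \<omega>) (p \<omega> i t e h)) \<in> borel_measurable \<Omega>"
  using measurable_compose[OF measurable_Pair[OF f pm[OF i]] Gm[OF i]] by simp

lemma mli:
  assumes i: "i \<in> (\<Union>j<N. C j)"
    and x0: "x0 \<in> borel_measurable \<Omega>" and z: "z \<in> borel_measurable \<Omega>" and y: "y \<in> borel_measurable \<Omega>"
  shows "(\<lambda>\<omega>. local_iter G \<gamma> (p \<omega>) i t e (x0 \<omega>) (z \<omega>) (y \<omega>) h) \<in> borel_measurable \<Omega>"
proof (induction h)
  case 0 then show ?case using x0 by simp
next
  case (Suc h)
  show ?case
    by (simp add: Let_def, intro borel_measurable_diff borel_measurable_scaleR borel_measurable_add
        borel_measurable_const mG i Suc z y)
qed

lemma mepoch: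
  assumes xt: "xt \<in> borel_measurable \<Omega>" and y: "\<And>j. j < N \<Longrightarrow> (\<lambda>\<omega>. y \<omega> j) \<in> borel_measurable \<Omega>"
  shows "(\<forall>j<N. (\<lambda>\<omega>. fst (mtgc_epoch G \<gamma> H N C (p \<omega>) t (xt \<omega>) (y \<omega>) e) j) \<in> borel_measurable \<Omega>)
       \<and> (\<forall>i\<in>(\<Union>j<N. C j). (\<lambda>\<omega>. snd (mtgc_epoch G \<gamma> H N C (p \<omega>) t (xt \<omega>) (y \<omega>) e) i) \<in> borel_measurable \<Omega>)"
proof (induction e)
  case 0
  have "(\<lambda>\<omega>. - G i (xt \<omega>) (p \<omega> i t 0 0) + gavg C (grp N C i) (\<lambda>i'. G i' (xt \<omega>) (p \<omega> i' t 0 0)))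
        \<in> borel_measurable \<Omega>" if i: "i \<in> (\<Union>j<N. C j)" for i
  proof -
    have g: "grp N C i < N" using grp_Cl[OF disj i] by simp
    show ?thesis
      by (intro borel_measurable_add borel_measurable_uminus mG xt i meas_gavg)
         (use g in \<open>auto intro!: mG xt\<close>)
  qed
  then show ?case using xt by simp
next
  case (Suc e)
  define xb where "xb \<omega> = fst (mtgc_epoch G \<gamma> H N C (p \<omega>) t (xt \<omega>) (y \<omega>) e)" for \<omega>
  define z where "z \<omega> = snd (mtgc_epoch G \<gamma> H N C (p \<omega>) t (xt \<omega>) (y \<omega>) e)" for \<omega>
  define xH where "xH \<omega> = (\<lambda>i. local_iter G \<gamma> (p \<omega>) i t e (xb \<omega> (grp N C i)) (z \<omega> i) (y \<omega> (grp N C i)) H)" for \<omega>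
  have xH: "(\<lambda>\<omega>. xH \<omega> i) \<in> borel_measurable \<Omega>" if i: "i \<in> (\<Union>j<N. C j)" for i
  proof -
    have g: "grp N C i < N" using grp_Cl[OF disj i] by simp
    show ?thesis unfolding xH_def
      by (rule mli[OF i]) (use Suc g i in \<open>auto simp: xb_def z_def y\<close>)
  qed
  have xb': "(\<lambda>\<omega>. gavg C j (xH \<omega>)) \<in> borel_measurable \<Omega>" if "j < N" for j
    using that by (intro meas_gavg xH) auto
  have eq: "mtgc_epoch G \<gamma> H N C (p \<omega>) t (xt \<omega>) (y \<omega>) (Suc e) =
     ((\<lambda>j. gavg C j (xH \<omega>)), \<lambda>i. z \<omega> i + (1 / (real H * \<gamma>)) *\<^sub>R (xH \<omega> i - gavg C (grp N C i) (xH \<omega>)))" for \<omega>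
    by (simp add: Let_def xb_def z_def xH_def)
  show ?case unfolding eq
  proof (intro conjI allI ballI impI)
    fix j assume "j < N" then show "(\<lambda>\<omega>. fst ((\<lambda>j. gavg C j (xH \<omega>)), \<lambda>i. z \<omega> i + (1 / (real H * \<gamma>)) *\<^sub>R (xH \<omega> i - gavg C (grp N C i) (xH \<omega>))) j) \<in> borel_measurable \<Omega>"
      using xb' by simp
  next
    fix i assume i: "i \<in> (\<Union>j<N. C j)"
    have g: "grp N C i < N" using grp_Cl[OF disj i] by simp
    have zi: "(\<lambda>\<omega>. z \<omega> i) \<in> borel_measurable \<Omega>" using Suc.IH i unfolding z_def by blast
    show "(\<lambda>\<omega>. snd ((\<lambda>j. gavg C j (xH \<omega>)), \<lambda>i. z \<omega> i + (1 / (real H * \<gamma>)) *\<^sub>R (xH \<omega> i - gavg C (grp N C i) (xH \<omega>))) i) \<in> borel_measurable \<Omega>"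
      using zi xH[OF i] xb'[OF g] by simp
  qed
qed

lemma mround:
  "(\<lambda>\<omega>. fst (mtgc_round G \<gamma> H E N C x0 (p \<omega>) t)) \<in> borel_measurable \<Omega>
   \<and> (\<forall>j<N. (\<lambda>\<omega>. snd (mtgc_round G \<gamma> H E N C x0 (p \<omega>) t) j) \<in> borel_measurable \<Omega>)"
proof (induction t)
  case 0
  have "(\<lambda>\<omega>. - gavg C j (\<lambda>i. G i x0 (p \<omega> i 0 0 0)) + gmean N (\<lambda>j'. gavg C j' (\<lambda>i. G i x0 (p \<omega> i 0 0 0))))
     \<in> borel_measurable \<Omega>" if "j < N" for j
    using that by (intro borel_measurable_add borel_measurable_uminus meas_gavg meas_gmean mG) auto
  then show ?case by simp
next
  case (Suc t)
  define x where "x \<omega> = fst (mtgc_round G \<gamma> H E N C x0 (p \<omega>) t)" for \<omega>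
  define y where "y \<omega> = snd (mtgc_round G \<gamma> H E N C x0 (p \<omega>) t)" for \<omega>
  define xbE where "xbE \<omega> = fst (mtgc_epoch G \<gamma> H N C (p \<omega>) t (x \<omega>) (y \<omega>) E)" for \<omega>
  have x: "x \<in> borel_measurable \<Omega>" and y: "\<And>j. j < N \<Longrightarrow> (\<lambda>\<omega>. y \<omega> j) \<in> borel_measurable \<Omega>"
    using Suc.IH unfolding x_def[abs_def] y_def by auto
  have xbE: "\<And>j. j < N \<Longrightarrow> (\<lambda>\<omega>. xbE \<omega> j) \<in> borel_measurable \<Omega>"
    using mepoch[OF x, of y, OF y] unfolding xbE_def by blast
  have xm: "(\<lambda>\<omega>. gmean N (xbE \<omega>)) \<in> borel_measurable \<Omega>"
    by (intro meas_gmean xbE)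
  have eq: "mtgc_round G \<gamma> H E N C x0 (p \<omega>) (Suc t) = (gmean N (xbE \<omega>),
     \<lambda>j. y \<omega> j + (1 / (real H * real E * \<gamma>)) *\<^sub>R (xbE \<omega> j - gmean N (xbE \<omega>)))" for \<omega>
    by (simp add: Let_def x_def y_def xbE_def)
  show ?case unfolding eq using xm y xbE by auto
qed


lemma m_xbar: "(\<lambda>\<omega>. xbar G \<gamma> H E N C x0 (p \<omega>) t) \<in> borel_measurable \<Omega>"
  using mround unfolding xbar_def by blast

lemma m_yv: "j < N \<Longrightarrow> (\<lambda>\<omega>. yv G \<gamma> H E N C x0 (p \<omega>) t j) \<in> borel_measurable \<Omega>"
  using mround unfolding yv_def by blast

lemma m_epoch:
  "(\<forall>j<N. (\<lambda>\<omega>. xbj G \<gamma> H E N C x0 (p \<omega>) t e j) \<in> borel_measurable \<Omega>) \<and>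
   (\<forall>i\<in>(\<Union>j<N. C j). (\<lambda>\<omega>. zv G \<gamma> H E N C x0 (p \<omega>) t e i) \<in> borel_measurable \<Omega>)"
  unfolding xbj_def zv_def
  by (rule mepoch[OF m_xbar, of "\<lambda>\<omega>. yv G \<gamma> H E N C x0 (p \<omega>) t", OF m_yv])

lemma m_xbj: "j < N \<Longrightarrow> (\<lambda>\<omega>. xbj G \<gamma> H E N C x0 (p \<omega>) t e j) \<in> borel_measurable \<Omega>"
  using m_epoch by blast

lemma m_zv: "i \<in> (\<Union>j<N. C j) \<Longrightarrow> (\<lambda>\<omega>. zv G \<gamma> H E N C x0 (p \<omega>) t e i) \<in> borel_measurable \<Omega>"
  using m_epoch by blast

lemma m_xloc:
  assumes i: "i \<in> (\<Union>j<N. C j)"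
  shows "(\<lambda>\<omega>. xloc G \<gamma> H E N C x0 (p \<omega>) t e i h) \<in> borel_measurable \<Omega>"
proof -
  have g: "grp N C i < N" using grp_Cl[OF disj i] by simp
  show ?thesis unfolding xloc_def
    by (rule mli[OF i m_xbj[OF g] m_zv[OF i] m_yv[OF g]])
qed

lemma m_xhat: "(\<lambda>\<omega>. xhat G \<gamma> H E N C x0 (p \<omega>) t e) \<in> borel_measurable \<Omega>"
  unfolding xhat_def by (intro meas_gmean m_xbj)

end


definition nsum where
  "nsum G gradF \<gamma> H E N C x0 p t e i h =
     (\<Sum>k<h. G i (xloc G \<gamma> H E N C x0 p t e i k) (p i t e k) - gradF i (xloc G \<gamma> H E N C x0 p t e i k))"

locale gctx =
  fixes N :: nat and C :: "nat \<Rightarrow> nat set"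
  assumes disj: "\<And>j j'. j < N \<Longrightarrow> j' < N \<Longrightarrow> j \<noteq> j' \<Longrightarrow> C j \<inter> C j' = {}"
begin
lemma gCl: "i \<in> (\<Union>j<N. C j) \<Longrightarrow> grp N C i < N \<and> i \<in> C (grp N C i)"
  using grp_eq[OF disj] by auto
end

definition lexlt :: "nat \<Rightarrow> nat \<Rightarrow> nat \<Rightarrow> nat \<Rightarrow> nat \<Rightarrow> nat \<Rightarrow> bool" where
  "lexlt t' e' h' t e h = (t' < t \<or> (t' = t \<and> (e' < e \<or> (e' = e \<and> h' < h))))"

lemma gavg_cong: "(\<And>i. i \<in> C j \<Longrightarrow> v i = v' i) \<Longrightarrow> gavg C j v = gavg C j v'"
  unfolding gavg_def by (simp cong: sum.cong)

lemma gmean_cong: "(\<And>j. j < N \<Longrightarrow> v j = v' j) \<Longrightarrow> gmean N v = gmean N v'"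
  unfolding gmean_def by (subst sum.cong[of "{..<N}" "{..<N}" v v']) auto

lemma agree_li:
  assumes "\<And>h'. h' < h \<Longrightarrow> p i t e h' = p' i t e h'"
  shows "local_iter G \<gamma> p i t e x z y h = local_iter G \<gamma> p' i t e x z y h"
  using assms by (induction h) (auto simp: Let_def)

context gctx begin

lemma agree_epoch:
  assumes a0: "\<And>i. i \<in> (\<Union>j<N. C j) \<Longrightarrow> p i t 0 0 = p' i t 0 0"
    and ay: "\<And>j. j < N \<Longrightarrow> y j = yy j"
  shows "(\<forall>i\<in>(\<Union>j<N. C j). \<forall>e'<e. \<forall>h. p i t e' h = p' i t e' h) \<longrightarrow>
    (\<forall>j<N. fst (mtgc_epoch G \<gamma> H N C p t xt y e) j = fst (mtgc_epoch G \<gamma> H N C p' t xt yy e) j) \<and>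
    (\<forall>i\<in>(\<Union>j<N. C j). snd (mtgc_epoch G \<gamma> H N C p t xt y e) i = snd (mtgc_epoch G \<gamma> H N C p' t xt yy e) i)"
proof (induction e)
  case 0
  show ?case
  proof (intro impI conjI allI ballI)
    fix i assume i: "i \<in> (\<Union>j<N. C j)"
    have g: "grp N C i < N" using gCl[OF i] by simp
    have "gavg C (grp N C i) (\<lambda>i'. G i' xt (p i' t 0 0)) = gavg C (grp N C i) (\<lambda>i'. G i' xt (p' i' t 0 0))"
    proof (rule gavg_cong)
      fix i' assume "i' \<in> C (grp N C i)"
      then have "i' \<in> (\<Union>j<N. C j)" using g by blast
      then show "G i' xt (p i' t 0 0) = G i' xt (p' i' t 0 0)" using a0 by simp
    qed
    then show "snd (mtgc_epoch G \<gamma> H N C p t xt y 0) i = snd (mtgc_epoch G \<gamma> H N C p' t xt yy 0) i"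
      using a0[OF i] by simp
  qed simp
next
  case (Suc e)
  show ?case
  proof (intro impI)
    assume A: "\<forall>i\<in>(\<Union>j<N. C j). \<forall>e'<Suc e. \<forall>h. p i t e' h = p' i t e' h"
    then have IH: "(\<forall>j<N. fst (mtgc_epoch G \<gamma> H N C p t xt y e) j = fst (mtgc_epoch G \<gamma> H N C p' t xt yy e) j) \<and>
    (\<forall>i\<in>(\<Union>j<N. C j). snd (mtgc_epoch G \<gamma> H N C p t xt y e) i = snd (mtgc_epoch G \<gamma> H N C p' t xt yy e) i)"
      using Suc.IH by auto
    define xb where "xb = fst (mtgc_epoch G \<gamma> H N C p t xt y e)"
    define z where "z = snd (mtgc_epoch G \<gamma> H N C p t xt y e)"
    define xb2 where "xb2 = fst (mtgc_epoch G \<gamma> H N C p' t xt yy e)"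
    define z2 where "z2 = snd (mtgc_epoch G \<gamma> H N C p' t xt yy e)"
    define xH where "xH = (\<lambda>i. local_iter G \<gamma> p i t e (xb (grp N C i)) (z i) (y (grp N C i)) H)"
    define xH2 where "xH2 = (\<lambda>i. local_iter G \<gamma> p' i t e (xb2 (grp N C i)) (z2 i) (yy (grp N C i)) H)"
    have xHe: "xH i = xH2 i" if i: "i \<in> (\<Union>j<N. C j)" for i
    proof -
      have g: "grp N C i < N" using gCl[OF i] by simp
      have zz: "z i = z2 i" using IH i unfolding z_def z2_def by blast
      have xx: "xb (grp N C i) = xb2 (grp N C i)" using IH g unfolding xb_def xb2_def by blast
      have "xH i = local_iter G \<gamma> p' i t e (xb (grp N C i)) (z i) (y (grp N C i)) H"
        unfolding xH_def by (rule agree_li) (use A i in auto)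
      also have "\<dots> = xH2 i" unfolding xH2_def by (simp add: zz xx ay[OF g])
      finally show ?thesis .
    qed
    have ge: "gavg C j xH = gavg C j xH2" if "j < N" for j
      by (rule gavg_cong) (use xHe that in auto)
    have eq1: "mtgc_epoch G \<gamma> H N C p t xt y (Suc e) =
     ((\<lambda>j. gavg C j xH), \<lambda>i. z i + (1 / (real H * \<gamma>)) *\<^sub>R (xH i - gavg C (grp N C i) xH))"
      by (simp add: Let_def xb_def z_def xH_def)
    have eq2: "mtgc_epoch G \<gamma> H N C p' t xt yy (Suc e) =
     ((\<lambda>j. gavg C j xH2), \<lambda>i. z2 i + (1 / (real H * \<gamma>)) *\<^sub>R (xH2 i - gavg C (grp N C i) xH2))"
      by (simp add: Let_def xb2_def z2_def xH2_def)
    show "(\<forall>j<N. fst (mtgc_epoch G \<gamma> H N C p t xt y (Suc e)) j = fst (mtgc_epoch G \<gamma> H N C p' t xt yy (Suc e)) j) \<and>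
    (\<forall>i\<in>(\<Union>j<N. C j). snd (mtgc_epoch G \<gamma> H N C p t xt y (Suc e)) i = snd (mtgc_epoch G \<gamma> H N C p' t xt yy (Suc e)) i)"
      unfolding eq1 eq2
    proof (intro conjI allI ballI impI)
      fix i assume i: "i \<in> (\<Union>j<N. C j)"
      have g: "grp N C i < N" using gCl[OF i] by simp
      show "snd ((\<lambda>j. gavg C j xH), \<lambda>i. z i + (1 / (real H * \<gamma>)) *\<^sub>R (xH i - gavg C (grp N C i) xH)) i =
            snd ((\<lambda>j. gavg C j xH2), \<lambda>i. z2 i + (1 / (real H * \<gamma>)) *\<^sub>R (xH2 i - gavg C (grp N C i) xH2)) i"
      proof -
        have zz: "z i = z2 i" using IH i unfolding z_def z2_def by blast
        show ?thesis using zz xHe[OF i] ge[OF g] by simp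
      qed
    qed (use ge in simp)
  qed
qed

lemma agree_round:
  shows "(\<forall>i\<in>(\<Union>j<N. C j). \<forall>t'<t. \<forall>e h. p i t' e h = p' i t' e h) \<longrightarrow>
    fst (mtgc_round G \<gamma> H E N C x0 p t) = fst (mtgc_round G \<gamma> H E N C x0 p' t) \<and>
    ((\<forall>i\<in>(\<Union>j<N. C j). p i t 0 0 = p' i t 0 0) \<longrightarrow>
      (\<forall>j<N. snd (mtgc_round G \<gamma> H E N C x0 p t) j = snd (mtgc_round G \<gamma> H E N C x0 p' t) j))"
proof (induction t)
  case 0
  show ?case
  proof (intro impI conjI allI)
    fix j assume j: "j < N" and a: "\<forall>i\<in>(\<Union>j<N. C j). p i 0 0 0 = p' i 0 0 0"
    have 1: "gavg C j (\<lambda>i. G i x0 (p i 0 0 0)) = gavg C j (\<lambda>i. G i x0 (p' i 0 0 0))" if "j < N" for j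
      by (rule gavg_cong) (use a that in auto)
    have "gmean N (\<lambda>j'. gavg C j' (\<lambda>i. G i x0 (p i 0 0 0))) = gmean N (\<lambda>j'. gavg C j' (\<lambda>i. G i x0 (p' i 0 0 0)))"
      by (rule gmean_cong) (use 1 in auto)
    then show "snd (mtgc_round G \<gamma> H E N C x0 p 0) j = snd (mtgc_round G \<gamma> H E N C x0 p' 0) j"
      using 1[OF j] by simp
  qed simp
next
  case (Suc t)
  show ?case
  proof (intro impI)
    assume A: "\<forall>i\<in>(\<Union>j<N. C j). \<forall>t'<Suc t. \<forall>e h. p i t' e h = p' i t' e h"
    have IH1: "fst (mtgc_round G \<gamma> H E N C x0 p t) = fst (mtgc_round G \<gamma> H E N C x0 p' t)"
      using Suc.IH A by auto
    have IH2: "\<forall>j<N. snd (mtgc_round G \<gamma> H E N C x0 p t) j = snd (mtgc_round G \<gamma> H E N C x0 p' t) j"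
      using Suc.IH A by auto
    define x where "x = fst (mtgc_round G \<gamma> H E N C x0 p t)"
    define y where "y = snd (mtgc_round G \<gamma> H E N C x0 p t)"
    define y2 where "y2 = snd (mtgc_round G \<gamma> H E N C x0 p' t)"
    define xbE where "xbE = fst (mtgc_epoch G \<gamma> H N C p t x y E)"
    define xbE2 where "xbE2 = fst (mtgc_epoch G \<gamma> H N C p' t x y2 E)"
    have xe: "xbE j = xbE2 j" if j: "j < N" for j
    proof -
      have a0: "\<And>i. i \<in> (\<Union>j<N. C j) \<Longrightarrow> p i t 0 0 = p' i t 0 0" using A by blast
      have ay: "\<And>j. j < N \<Longrightarrow> y j = y2 j" using IH2 by (simp add: y_def y2_def)
      have A': "\<forall>i\<in>(\<Union>j<N. C j). \<forall>e'<E. \<forall>h. p i t e' h = p' i t e' h" using A by blast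
      show ?thesis
        using agree_epoch[of p t p' y y2 E G \<gamma> H x, OF a0 ay] A' j unfolding xbE_def xbE2_def by blast
    qed
    have gm: "gmean N xbE = gmean N xbE2" by (rule gmean_cong) (use xe in auto)
    have eq1: "mtgc_round G \<gamma> H E N C x0 p (Suc t) = (gmean N xbE,
     \<lambda>j. y j + (1 / (real H * real E * \<gamma>)) *\<^sub>R (xbE j - gmean N xbE))"
      by (simp add: Let_def x_def y_def xbE_def)
    have eq2: "mtgc_round G \<gamma> H E N C x0 p' (Suc t) = (gmean N xbE2,
     \<lambda>j. y2 j + (1 / (real H * real E * \<gamma>)) *\<^sub>R (xbE2 j - gmean N xbE2))"
      by (simp add: Let_def x_def[symmetric] IH1[symmetric] y2_def xbE2_def)
    show "fst (mtgc_round G \<gamma> H E N C x0 p (Suc t)) = fst (mtgc_round G \<gamma> H E N C x0 p' (Suc t)) \<and>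
    ((\<forall>i\<in>(\<Union>j<N. C j). p i (Suc t) 0 0 = p' i (Suc t) 0 0) \<longrightarrow>
      (\<forall>j<N. snd (mtgc_round G \<gamma> H E N C x0 p (Suc t)) j = snd (mtgc_round G \<gamma> H E N C x0 p' (Suc t)) j))"
      unfolding eq1 eq2 using gm xe IH2 by (auto simp: y_def y2_def)
  qed
qed


lemma agree_xloc:
  assumes i: "i \<in> (\<Union>j<N. C j)"
    and A: "\<And>i' t' e' h'. i' \<in> (\<Union>j<N. C j) \<Longrightarrow> lexlt t' e' h' t e h \<Longrightarrow> p i' t' e' h' = p' i' t' e' h'"
  shows "xloc G \<gamma> H E N C x0 p t e i h = xloc G \<gamma> H E N C x0 p' t e i h"
proof -
  have g: "grp N C i < N" using gCl[OF i] by simp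
  have R: "fst (mtgc_round G \<gamma> H E N C x0 p t) = fst (mtgc_round G \<gamma> H E N C x0 p' t)"
    using agree_round[where t=t and p=p and p'=p' and G=G and \<gamma>=\<gamma> and H=H and E=E] A by (auto simp: lexlt_def)
  show ?thesis
  proof (cases "e = 0 \<and> h = 0")
    case True
    then show ?thesis using R by (simp add: xloc_def xbj_def xbar_def)
  next
    case False
    then have a0: "\<And>i. i \<in> (\<Union>j<N. C j) \<Longrightarrow> p i t 0 0 = p' i t 0 0"
      by (intro A) (auto simp: lexlt_def)
    have Y: "\<forall>j<N. yv G \<gamma> H E N C x0 p t j = yv G \<gamma> H E N C x0 p' t j"
      using agree_round[where t=t and p=p and p'=p' and G=G and \<gamma>=\<gamma> and H=H and E=E] A a0 by (auto simp: lexlt_def yv_def)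
    have ay: "\<And>j. j < N \<Longrightarrow> yv G \<gamma> H E N C x0 p t j = yv G \<gamma> H E N C x0 p' t j" using Y by blast
    have Ae: "\<forall>i\<in>(\<Union>j<N. C j). \<forall>e'<e. \<forall>h. p i t e' h = p' i t e' h"
      using A by (auto simp: lexlt_def)
    have EP: "(\<forall>j<N. fst (mtgc_epoch G \<gamma> H N C p t (xbar G \<gamma> H E N C x0 p t) (yv G \<gamma> H E N C x0 p t) e) j
                  = fst (mtgc_epoch G \<gamma> H N C p' t (xbar G \<gamma> H E N C x0 p t) (yv G \<gamma> H E N C x0 p' t) e) j) \<and>
       (\<forall>i\<in>(\<Union>j<N. C j). snd (mtgc_epoch G \<gamma> H N C p t (xbar G \<gamma> H E N C x0 p t) (yv G \<gamma> H E N C x0 p t) e) i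
                  = snd (mtgc_epoch G \<gamma> H N C p' t (xbar G \<gamma> H E N C x0 p t) (yv G \<gamma> H E N C x0 p' t) e) i)"
      using agree_epoch[of p t p' "yv G \<gamma> H E N C x0 p t" "yv G \<gamma> H E N C x0 p' t" e G \<gamma> H
          "xbar G \<gamma> H E N C x0 p t", OF a0 ay] Ae by blast
    have xb: "xbj G \<gamma> H E N C x0 p t e (grp N C i) = xbj G \<gamma> H E N C x0 p' t e (grp N C i)"
      using EP g R unfolding xbj_def xbar_def by simp
    have zz: "zv G \<gamma> H E N C x0 p t e i = zv G \<gamma> H E N C x0 p' t e i"
    proof -
      have "snd (mtgc_epoch G \<gamma> H N C p t (xbar G \<gamma> H E N C x0 p t) (yv G \<gamma> H E N C x0 p t) e) i
                  = snd (mtgc_epoch G \<gamma> H N C p' t (xbar G \<gamma> H E N C x0 p t) (yv G \<gamma> H E N C x0 p' t) e) i"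
        using EP i by blast
      then show ?thesis using R unfolding zv_def xbar_def by simp
    qed
    have "xloc G \<gamma> H E N C x0 p t e i h = local_iter G \<gamma> p' i t e (xbj G \<gamma> H E N C x0 p t e (grp N C i))
       (zv G \<gamma> H E N C x0 p t e i) (yv G \<gamma> H E N C x0 p t (grp N C i)) h"
      unfolding xloc_def by (rule agree_li) (use A i in \<open>auto simp: lexlt_def\<close>)
    also have "\<dots> = xloc G \<gamma> H E N C x0 p' t e i h"
      unfolding xloc_def using xb zz ay[OF g] by simp
    finally show ?thesis .
  qed
qed

lemma agree_nsum:
  assumes i: "i \<in> (\<Union>j<N. C j)"
    and A: "\<And>i' t' e' h'. i' \<in> (\<Union>j<N. C j) \<Longrightarrow> lexlt t' e' h' t e h \<Longrightarrow> p i' t' e' h' = p' i' t' e' h'"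
  shows "nsum G gradF \<gamma> H E N C x0 p t e i h = nsum G gradF \<gamma> H E N C x0 p' t e i h"
  unfolding nsum_def
proof (rule sum.cong)
  fix k assume k: "k \<in> {..<h}"
  have A': "\<And>i' t' e' h'. i' \<in> (\<Union>j<N. C j) \<Longrightarrow> lexlt t' e' h' t e k \<Longrightarrow> p i' t' e' h' = p' i' t' e' h'"
    by (rule A) (use k in \<open>auto simp: lexlt_def\<close>)
  have "p i t e k = p' i t e k" using A[OF i] k by (auto simp: lexlt_def)
  then show "G i (xloc G \<gamma> H E N C x0 p t e i k) (p i t e k) - gradF i (xloc G \<gamma> H E N C x0 p t e i k) =
    G i (xloc G \<gamma> H E N C x0 p' t e i k) (p' i t e k) - gradF i (xloc G \<gamma> H E N C x0 p' t e i k)"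
  proof -
    have "xloc G \<gamma> H E N C x0 p t e i k = xloc G \<gamma> H E N C x0 p' t e i k"
      by (rule agree_xloc[OF i]) (rule A')
    then show ?thesis using \<open>p i t e k = p' i t e k\<close> by simp
  qed
qed simp

end



lemma norm_add_sq_inner:
  fixes c g :: "'a::real_inner"
  shows "(norm (c + g))\<^sup>2 = (norm c)\<^sup>2 + 2 * (c \<bullet> g) + (norm g)\<^sup>2"
  by (simp add: power2_norm_eq_inner inner_add_left inner_add_right inner_commute)

lemma pt_bound:
  fixes g :: "'b \<Rightarrow> 'a::euclidean_space"
  assumes P: "prob_space Dd" and gm: "g \<in> borel_measurable Dd" and gi: "integrable Dd g"
    and g0: "(\<integral>s. g s \<partial>Dd) = 0"
    and gv: "(\<integral>\<^sup>+ s. ennreal ((norm (g s))\<^sup>2) \<partial>Dd) \<le> ennreal (\<sigma>\<^sup>2)"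
  shows "(\<integral>\<^sup>+ s. ennreal ((norm (c + g s))\<^sup>2) \<partial>Dd) \<le> ennreal ((norm c)\<^sup>2) + ennreal (\<sigma>\<^sup>2)"
proof -
  interpret prob_space Dd by (rule P)
  have sqm: "(\<lambda>s. (norm (g s))\<^sup>2) \<in> borel_measurable Dd" using gm by measurable
  have sqi: "integrable Dd (\<lambda>s. (norm (g s))\<^sup>2)"
    unfolding integrable_iff_bounded using sqm gv by (simp add: le_less_trans[OF gv])
  have ii: "integrable Dd (\<lambda>s. (norm c)\<^sup>2 + 2 * (c \<bullet> g s) + (norm (g s))\<^sup>2)"
    by (intro Bochner_Integration.integrable_add Bochner_Integration.integrable_mult_right integrable_inner_right gi sqi) simp
  have "(\<integral>\<^sup>+ s. ennreal ((norm (c + g s))\<^sup>2) \<partial>Dd) = (\<integral>\<^sup>+ s. ennreal ((norm c)\<^sup>2 + 2 * (c \<bullet> g s) + (norm (g s))\<^sup>2) \<partial>Dd)"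
    by (simp add: norm_add_sq_inner)
  also have "\<dots> = ennreal (\<integral>s. (norm c)\<^sup>2 + 2 * (c \<bullet> g s) + (norm (g s))\<^sup>2 \<partial>Dd)"
    by (rule nn_integral_eq_integral[OF ii]) (simp add: norm_add_sq_inner[symmetric])
  also have "(\<integral>s. (norm c)\<^sup>2 + 2 * (c \<bullet> g s) + (norm (g s))\<^sup>2 \<partial>Dd) = (norm c)\<^sup>2 + (\<integral>s. (norm (g s))\<^sup>2 \<partial>Dd)"
    using gi sqi g0 by (simp add: integral_add integrable_inner_right integral_mult_right prob_space)
  also have "ennreal \<dots> = ennreal ((norm c)\<^sup>2) + ennreal (\<integral>s. (norm (g s))\<^sup>2 \<partial>Dd)"
    by (rule ennreal_plus) (auto intro: integral_nonneg_AE)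
  also have "ennreal (\<integral>s. (norm (g s))\<^sup>2 \<partial>Dd) = (\<integral>\<^sup>+ s. ennreal ((norm (g s))\<^sup>2) \<partial>Dd)"
    by (rule nn_integral_eq_integral[OF sqi, symmetric]) simp
  finally show ?thesis using gv by (simp add: add_left_mono)
qed


lemma key_indep:
  fixes X Y :: "'w \<Rightarrow> 'r" and \<pi> :: "'r \<Rightarrow> 'b" and \<Phi> \<Psi> :: "'r \<Rightarrow> 'a::euclidean_space"
    and g :: "'a \<Rightarrow> 'b \<Rightarrow> 'a" and gr :: "'a \<Rightarrow> 'a"
  assumes M: "prob_space M" and Dd: "prob_space Dd"
    and ind: "prob_space.indep_var M S X S2 Y"
    and pim: "\<pi> \<in> measurable S2 Dd"
    and dY: "distr M Dd (\<lambda>\<omega>. \<pi> (Y \<omega>)) = Dd"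
    and Phi: "\<Phi> \<in> borel_measurable S" and Psi: "\<Psi> \<in> borel_measurable S"
    and gm: "(\<lambda>(x, s). g x s) \<in> borel_measurable (borel \<Otimes>\<^sub>M Dd)"
    and grm: "gr \<in> borel_measurable borel"
    and unb: "\<And>x. integrable Dd (g x) \<and> (\<integral>s. g x s \<partial>Dd) = gr x"
    and var: "\<And>x. (\<integral>\<^sup>+ s. ennreal ((norm (g x s - gr x))\<^sup>2) \<partial>Dd) \<le> ennreal (\<sigma>\<^sup>2)"
  shows "(\<integral>\<^sup>+ \<omega>. ennreal ((norm (\<Phi> (X \<omega>) + (g (\<Psi> (X \<omega>)) (\<pi> (Y \<omega>)) - gr (\<Psi> (X \<omega>)))))\<^sup>2) \<partial>M)
         \<le> (\<integral>\<^sup>+ \<omega>. ennreal ((norm (\<Phi> (X \<omega>)))\<^sup>2) \<partial>M) + ennreal (\<sigma>\<^sup>2)"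
proof -
  interpret P: prob_space M by (rule M)
  interpret Q: prob_space Dd by (rule Dd)
  have rv: "X \<in> measurable M S" "Y \<in> measurable M S2"
    and dd: "distr M S X \<Otimes>\<^sub>M distr M S2 Y = distr M (S \<Otimes>\<^sub>M S2) (\<lambda>x. (X x, Y x))"
    using ind unfolding P.indep_var_distribution_eq by auto
  interpret Q2: prob_space "distr M S2 Y" by (rule P.prob_space_distr[OF rv(2)])
  define f where "f z = ennreal ((norm (\<Phi> (fst z) + (g (\<Psi> (fst z)) (\<pi> (snd z)) - gr (\<Psi> (fst z)))))\<^sup>2)" for z
  have gpm: "(\<lambda>z. g (\<Psi> (fst z)) (\<pi> (snd z))) \<in> borel_measurable (S \<Otimes>\<^sub>M S2)"
  proof -
    have "(\<lambda>z. (\<Psi> (fst z), \<pi> (snd z))) \<in> measurable (S \<Otimes>\<^sub>M S2) (borel \<Otimes>\<^sub>M Dd)"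
      using Psi pim by measurable
    from measurable_compose[OF this gm] show ?thesis by simp
  qed
  have fm: "f \<in> borel_measurable (S \<Otimes>\<^sub>M S2)"
    unfolding f_def using Phi Psi grm gpm by measurable
  have XY: "(\<lambda>x. (X x, Y x)) \<in> measurable M (S \<Otimes>\<^sub>M S2)" using rv by measurable
  have "(\<integral>\<^sup>+ \<omega>. ennreal ((norm (\<Phi> (X \<omega>) + (g (\<Psi> (X \<omega>)) (\<pi> (Y \<omega>)) - gr (\<Psi> (X \<omega>)))))\<^sup>2) \<partial>M)
      = (\<integral>\<^sup>+ \<omega>. f (X \<omega>, Y \<omega>) \<partial>M)" by (simp add: f_def)
  also have "\<dots> = (\<integral>\<^sup>+ z. f z \<partial>distr M (S \<Otimes>\<^sub>M S2) (\<lambda>x. (X x, Y x)))"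
    by (rule nn_integral_distr[symmetric, OF XY]) (use fm in simp)
  also have "\<dots> = (\<integral>\<^sup>+ z. f z \<partial>(distr M S X \<Otimes>\<^sub>M distr M S2 Y))"
    using dd by simp
  also have "\<dots> = (\<integral>\<^sup>+ r. (\<integral>\<^sup>+ y. f (r, y) \<partial>distr M S2 Y) \<partial>distr M S X)"
    by (rule Q2.nn_integral_fst[symmetric]) (use fm in simp)
  also have "\<dots> \<le> (\<integral>\<^sup>+ r. ennreal ((norm (\<Phi> r))\<^sup>2) + ennreal (\<sigma>\<^sup>2) \<partial>distr M S X)"
  proof (rule nn_integral_mono)
    fix r
    have gi: "integrable Dd (\<lambda>s. g (\<Psi> r) s - gr (\<Psi> r))" using unb by simp
    have gmm: "(\<lambda>s. g (\<Psi> r) s - gr (\<Psi> r)) \<in> borel_measurable Dd" using gi by (rule borel_measurable_integrable)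
    have g0: "(\<integral>s. g (\<Psi> r) s - gr (\<Psi> r) \<partial>Dd) = 0"
      using unb[of "\<Psi> r"] by (simp add: Q.prob_space)
    have F: "(\<lambda>s. ennreal ((norm (\<Phi> r + (g (\<Psi> r) s - gr (\<Psi> r))))\<^sup>2)) \<in> borel_measurable Dd"
      using gmm by measurable
    have "(\<integral>\<^sup>+ y. f (r, y) \<partial>distr M S2 Y) = (\<integral>\<^sup>+ \<omega>. f (r, Y \<omega>) \<partial>M)"
      by (rule nn_integral_distr[OF rv(2)]) (use measurable_compose[OF pim F] in \<open>simp add: f_def\<close>)
    also have "\<dots> = (\<integral>\<^sup>+ \<omega>. ennreal ((norm (\<Phi> r + (g (\<Psi> r) (\<pi> (Y \<omega>)) - gr (\<Psi> r))))\<^sup>2) \<partial>M)"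
      by (simp add: f_def)
    also have "\<dots> = (\<integral>\<^sup>+ s. ennreal ((norm (\<Phi> r + (g (\<Psi> r) s - gr (\<Psi> r))))\<^sup>2) \<partial>distr M Dd (\<lambda>\<omega>. \<pi> (Y \<omega>)))"
      by (rule nn_integral_distr[symmetric]) (use rv pim F dY in auto)
    also have "\<dots> = (\<integral>\<^sup>+ s. ennreal ((norm (\<Phi> r + (g (\<Psi> r) s - gr (\<Psi> r))))\<^sup>2) \<partial>Dd)"
      using dY by simp
    also have "\<dots> \<le> ennreal ((norm (\<Phi> r))\<^sup>2) + ennreal (\<sigma>\<^sup>2)"
      by (rule pt_bound[OF Dd gmm gi g0 var])
    finally show "(\<integral>\<^sup>+ y. f (r, y) \<partial>distr M S2 Y) \<le> ennreal ((norm (\<Phi> r))\<^sup>2) + ennreal (\<sigma>\<^sup>2)" .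
  qed
  also have "\<dots> = (\<integral>\<^sup>+ \<omega>. ennreal ((norm (\<Phi> (X \<omega>)))\<^sup>2) + ennreal (\<sigma>\<^sup>2) \<partial>M)"
    by (rule nn_integral_distr[OF rv(1)]) (use Phi in measurable)
  also have "\<dots> = (\<integral>\<^sup>+ \<omega>. ennreal ((norm (\<Phi> (X \<omega>)))\<^sup>2) \<partial>M) + ennreal (\<sigma>\<^sup>2)"
    by (subst nn_integral_add) (use Phi rv in \<open>auto simp: P.emeasure_space_1\<close>)
  finally show ?thesis .
qed



lemma norm_sum_sq:
  fixes v :: "nat \<Rightarrow> 'a::real_normed_vector"
  shows "(norm (\<Sum>k<h. v k))\<^sup>2 \<le> real h * (\<Sum>k<h. (norm (v k))\<^sup>2)"
proof -
  have "(norm (\<Sum>k<h. v k))\<^sup>2 \<le> (\<Sum>k<h. norm (v k))\<^sup>2"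
    by (rule power_mono[OF norm_sum norm_ge_zero])
  also have "\<dots> \<le> (\<Sum>k<h. (norm (v k))\<^sup>2) * card {..<h}"
    by (rule sum_squared_le_sum_of_squares)
  finally show ?thesis by (simp add: mult.commute)
qed

lemma sq_add2:
  fixes a b :: "'a::real_normed_vector"
  shows "(norm (a + b))\<^sup>2 \<le> 2 * (norm a)\<^sup>2 + 2 * (norm b)\<^sup>2"
proof -
  have "(norm (a + b))\<^sup>2 \<le> (norm a + norm b)\<^sup>2"
    by (rule power_mono[OF norm_triangle_ineq norm_ge_zero])
  also have "\<dots> \<le> 2 * (norm a)\<^sup>2 + 2 * (norm b)\<^sup>2"
    using power2_sum[of "norm a" "norm b"] power2_diff[of "norm a" "norm b"] zero_le_power2[of "norm a - norm b"]
    by linarith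
  finally show ?thesis .
qed

lemma sq_add4:
  fixes a b c d :: "'a::real_normed_vector"
  shows "(norm (a + b + c + d))\<^sup>2 \<le> 4 * ((norm a)\<^sup>2 + (norm b)\<^sup>2 + (norm c)\<^sup>2 + (norm d)\<^sup>2)"
proof -
  have "(norm ((a + b) + (c + d)))\<^sup>2 \<le> 2 * (norm (a + b))\<^sup>2 + 2 * (norm (c + d))\<^sup>2" by (rule sq_add2)
  moreover have "(norm (a + b))\<^sup>2 \<le> 2 * (norm a)\<^sup>2 + 2 * (norm b)\<^sup>2" by (rule sq_add2)
  moreover have "(norm (c + d))\<^sup>2 \<le> 2 * (norm c)\<^sup>2 + 2 * (norm d)\<^sup>2" by (rule sq_add2)
  ultimately show ?thesis by (simp add: add.assoc)
qed

lemma sumsq_cube: "3 * (\<Sum>h<H. (real h)\<^sup>2) \<le> (real H) ^ 3"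
proof (induction H)
  case (Suc H)
  have "3 * (\<Sum>h<Suc H. (real h)\<^sup>2) = 3 * (\<Sum>h<H. (real h)\<^sup>2) + 3 * (real H)\<^sup>2" by simp
  also have "\<dots> \<le> (real H)^3 + 3 * (real H)\<^sup>2" using Suc by simp
  also have "\<dots> \<le> (real (Suc H))^3" by (simp add: power2_eq_square power3_eq_cube algebra_simps)
  finally show ?case .
qed simp

lemma path_main:
  fixes x n :: "nat \<Rightarrow> 'a::real_normed_vector" and gF :: "'a \<Rightarrow> 'a"
  assumes xdef: "\<And>h. x h = xb - \<gamma> *\<^sub>R (\<Sum>k<h. n k + gF (x k) + Bz)"
    and lip: "\<And>u v. norm (gF u - gF v) \<le> L * norm (u - v)"
    and L: "L \<ge> 0" and gam: "\<gamma> > 0" "8 * real H * L * \<gamma> \<le> 1"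
  shows "(\<Sum>h<H. (norm (xb - x h))\<^sup>2) \<le> 32/15 * \<gamma>\<^sup>2 * (\<Sum>h<H. (norm (\<Sum>k<h. n k))\<^sup>2)
          + 64/45 * \<gamma>\<^sup>2 * (real H)^3 * (norm (Bz + gF xb))\<^sup>2"
proof -
  define B where "B = Bz + gF xb"
  define a where "a h = (norm (xb - x h))\<^sup>2" for h
  define d where "d k = gF (x k) - gF xb + B" for k
  define A where "A = (\<Sum>h<H. a h)"
  have a0: "a h \<ge> 0" for h by (simp add: a_def)
  have dk: "(norm (d k))\<^sup>2 \<le> 2 * L\<^sup>2 * a k + 2 * (norm B)\<^sup>2" for k
  proof -
    have "(norm (d k))\<^sup>2 \<le> 2 * (norm (gF (x k) - gF xb))\<^sup>2 + 2 * (norm B)\<^sup>2"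
      unfolding d_def by (rule sq_add2)
    moreover have "(norm (gF (x k) - gF xb))\<^sup>2 \<le> (L * norm (x k - xb))\<^sup>2"
      by (rule power_mono[OF lip norm_ge_zero])
    moreover have "(L * norm (x k - xb))\<^sup>2 = L\<^sup>2 * a k"
      by (simp add: a_def power_mult_distrib norm_minus_commute)
    ultimately show ?thesis by linarith
  qed
  have ah: "a h \<le> (2 * \<gamma>\<^sup>2) * (norm (\<Sum>k<h. n k))\<^sup>2 + (4 * \<gamma>\<^sup>2 * L\<^sup>2) * (real h * (\<Sum>k<h. a k))
                + (4 * \<gamma>\<^sup>2 * (norm B)\<^sup>2) * (real h)\<^sup>2" for h
  proof -
    have "xb - x h = \<gamma> *\<^sub>R ((\<Sum>k<h. n k) + (\<Sum>k<h. d k))"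
      by (simp add: xdef[of h] d_def B_def sum.distrib[symmetric] algebra_simps)
    then have "a h = \<gamma>\<^sup>2 * (norm ((\<Sum>k<h. n k) + (\<Sum>k<h. d k)))\<^sup>2"
      by (simp add: a_def power_mult_distrib)
    moreover have "(norm ((\<Sum>k<h. n k) + (\<Sum>k<h. d k)))\<^sup>2 \<le> 2 * (norm (\<Sum>k<h. n k))\<^sup>2 + 2 * (norm (\<Sum>k<h. d k))\<^sup>2"
      by (rule sq_add2)
    moreover have "(norm (\<Sum>k<h. d k))\<^sup>2 \<le> real h * (\<Sum>k<h. (norm (d k))\<^sup>2)"
      by (rule norm_sum_sq)
    moreover have "(\<Sum>k<h. (norm (d k))\<^sup>2) \<le> (\<Sum>k<h. 2 * L\<^sup>2 * a k + 2 * (norm B)\<^sup>2)"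
      by (rule sum_mono[OF dk])
    moreover have "(\<Sum>k<h. 2 * L\<^sup>2 * a k + 2 * (norm B)\<^sup>2) = 2 * L\<^sup>2 * (\<Sum>k<h. a k) + 2 * real h * (norm B)\<^sup>2"
      by (simp add: sum.distrib sum_distrib_left)
    ultimately have "a h \<le> \<gamma>\<^sup>2 * (2 * (norm (\<Sum>k<h. n k))\<^sup>2 + 2 * (real h * (2 * L\<^sup>2 * (\<Sum>k<h. a k) + 2 * real h * (norm B)\<^sup>2)))"
    proof -
      assume e: "a h = \<gamma>\<^sup>2 * (norm ((\<Sum>k<h. n k) + (\<Sum>k<h. d k)))\<^sup>2"
        and i1: "(norm ((\<Sum>k<h. n k) + (\<Sum>k<h. d k)))\<^sup>2 \<le> 2 * (norm (\<Sum>k<h. n k))\<^sup>2 + 2 * (norm (\<Sum>k<h. d k))\<^sup>2"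
        and i2: "(norm (\<Sum>k<h. d k))\<^sup>2 \<le> real h * (\<Sum>k<h. (norm (d k))\<^sup>2)"
        and i3: "(\<Sum>k<h. (norm (d k))\<^sup>2) \<le> (\<Sum>k<h. 2 * L\<^sup>2 * a k + 2 * (norm B)\<^sup>2)"
        and e2: "(\<Sum>k<h. 2 * L\<^sup>2 * a k + 2 * (norm B)\<^sup>2) = 2 * L\<^sup>2 * (\<Sum>k<h. a k) + 2 * real h * (norm B)\<^sup>2"
      have "real h * (\<Sum>k<h. (norm (d k))\<^sup>2) \<le> real h * (2 * L\<^sup>2 * (\<Sum>k<h. a k) + 2 * real h * (norm B)\<^sup>2)"
        using i3 e2 by (intro mult_left_mono) auto
      then have "(norm ((\<Sum>k<h. n k) + (\<Sum>k<h. d k)))\<^sup>2 \<le> 2 * (norm (\<Sum>k<h. n k))\<^sup>2 + 2 * (real h * (2 * L\<^sup>2 * (\<Sum>k<h. a k) + 2 * real h * (norm B)\<^sup>2))"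
        using i1 i2 by linarith
      then show ?thesis unfolding e by (rule mult_left_mono) simp
    qed
    then show ?thesis by (simp add: algebra_simps power2_eq_square)
  qed
  have A0: "A \<ge> 0" unfolding A_def by (rule sum_nonneg) (simp add: a0)
  have inner: "(\<Sum>k<h. a k) \<le> A" if "h \<le> H" for h
    unfolding A_def by (rule sum_mono2) (use that a0 in auto)
  have hs: "(\<Sum>h<H. real h * (\<Sum>k<h. a k)) \<le> (\<Sum>h<H. real H * A)"
  proof (rule sum_mono)
    fix h assume "h \<in> {..<H}"
    then have "h \<le> H" by simp
    then show "real h * (\<Sum>k<h. a k) \<le> real H * A"
      using inner[of h] A0 by (intro mult_mono) (auto intro: sum_nonneg simp: a0)
  qed
  have hs2: "(\<Sum>h<H. real H * A) = (real H)\<^sup>2 * A" by (simp add: power2_eq_square)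
  have LL: "4 * \<gamma>\<^sup>2 * L\<^sup>2 * (real H)\<^sup>2 \<le> 1/16"
  proof -
    have "0 \<le> 8 * real H * L * \<gamma>" using L gam by simp
    then have "(8 * real H * L * \<gamma>)\<^sup>2 \<le> 1\<^sup>2" by (rule power_mono[OF gam(2)])
    then show ?thesis by (simp add: power_mult_distrib mult_ac)
  qed
  have cube: "3 * (\<Sum>h<H. (real h)\<^sup>2) \<le> (real H) ^ 3" by (rule sumsq_cube)
  have "A \<le> (\<Sum>h<H. (2 * \<gamma>\<^sup>2) * (norm (\<Sum>k<h. n k))\<^sup>2 + (4 * \<gamma>\<^sup>2 * L\<^sup>2) * (real h * (\<Sum>k<h. a k))
                + (4 * \<gamma>\<^sup>2 * (norm B)\<^sup>2) * (real h)\<^sup>2)"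
    unfolding A_def by (rule sum_mono[OF ah])
  also have "\<dots> = 2 * \<gamma>\<^sup>2 * (\<Sum>h<H. (norm (\<Sum>k<h. n k))\<^sup>2) + (4 * \<gamma>\<^sup>2 * L\<^sup>2) * (\<Sum>h<H. real h * (\<Sum>k<h. a k))
                + (4 * \<gamma>\<^sup>2 * (norm B)\<^sup>2) * (\<Sum>h<H. (real h)\<^sup>2)"
    by (simp only: sum.distrib sum_distrib_left[symmetric])
  finally have A1: "A \<le> 2 * \<gamma>\<^sup>2 * (\<Sum>h<H. (norm (\<Sum>k<h. n k))\<^sup>2) + (4 * \<gamma>\<^sup>2 * L\<^sup>2) * (\<Sum>h<H. real h * (\<Sum>k<h. a k))
                + (4 * \<gamma>\<^sup>2 * (norm B)\<^sup>2) * (\<Sum>h<H. (real h)\<^sup>2)" .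
  have t2: "(4 * \<gamma>\<^sup>2 * L\<^sup>2) * (\<Sum>h<H. real h * (\<Sum>k<h. a k)) \<le> A / 16"
  proof -
    have "(4 * \<gamma>\<^sup>2 * L\<^sup>2) * (\<Sum>h<H. real h * (\<Sum>k<h. a k)) \<le> (4 * \<gamma>\<^sup>2 * L\<^sup>2) * ((real H)\<^sup>2 * A)"
      using hs hs2 L gam by (intro mult_left_mono) (auto simp: power2_eq_square mult.assoc)
    also have "\<dots> = (4 * \<gamma>\<^sup>2 * L\<^sup>2 * (real H)\<^sup>2) * A" by simp
    also have "\<dots> \<le> (1/16) * A" by (rule mult_right_mono[OF LL A0])
    finally show ?thesis by simp
  qed
  have t3: "(4 * \<gamma>\<^sup>2 * (norm B)\<^sup>2) * (\<Sum>h<H. (real h)\<^sup>2) \<le> (4 * \<gamma>\<^sup>2 * (norm B)\<^sup>2) * ((real H)^3 / 3)"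
    using cube by (intro mult_left_mono) auto
  have "A \<le> 32/15 * \<gamma>\<^sup>2 * (\<Sum>h<H. (norm (\<Sum>k<h. n k))\<^sup>2) + 64/45 * \<gamma>\<^sup>2 * (real H)^3 * (norm B)\<^sup>2"
    using A1 t2 t3 by (simp add: algebra_simps)
  then show ?thesis by (simp add: A_def a_def B_def)
qed


lemma li_closed:
  "local_iter G \<gamma> p i t e x0 z y h =
     x0 - \<gamma> *\<^sub>R (\<Sum>k<h. G i (local_iter G \<gamma> p i t e x0 z y k) (p i t e k) + z + y)"
  by (induction h) (simp_all add: Let_def algebra_simps)

lemma lip_fj:
  assumes fin: "finite (C j)" and ne: "C j \<noteq> {}"
    and lip: "\<And>i x y. i \<in> C j \<Longrightarrow> norm (gradF i x - gradF i y) \<le> L * norm (x - y)"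
  shows "norm (grad_fj gradF C j u - grad_fj gradF C j v) \<le> L * norm (u - v)"
proof -
  have c: "real (card (C j)) > 0" using fin ne by (simp add: card_gt_0_iff)
  have "grad_fj gradF C j u - grad_fj gradF C j v = (1 / real (card (C j))) *\<^sub>R (\<Sum>i\<in>C j. gradF i u - gradF i v)"
    by (simp add: grad_fj_def gavg_def sum_subtractf scaleR_diff_right)
  then have "norm (grad_fj gradF C j u - grad_fj gradF C j v) = (1 / real (card (C j))) * norm (\<Sum>i\<in>C j. gradF i u - gradF i v)"
    using c by simp
  also have "\<dots> \<le> (1 / real (card (C j))) * (\<Sum>i\<in>C j. L * norm (u - v))"
    by (intro mult_left_mono order_trans[OF norm_sum] sum_mono lip) (use c in auto)
  also have "\<dots> = L * norm (u - v)" using c by simp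
  finally show ?thesis .
qed

context mctx
begin
lemma m_nsum:
  assumes i: "i \<in> (\<Union>j<N. C j)" and gF: "gradF i \<in> borel_measurable borel"
  shows "(\<lambda>\<omega>. nsum G gradF \<gamma> H E N C x0 (p \<omega>) t e i h) \<in> borel_measurable \<Omega>"
  unfolding nsum_def
  by (intro borel_measurable_sum borel_measurable_diff mG[OF i] m_xloc[OF i]
      measurable_compose[OF _ gF])
end


lemma nn_int_lin:
  assumes f: "f \<in> borel_measurable M" and g: "g \<in> borel_measurable M"
    and c: "c \<ge> 0" and f0: "\<And>x. f x \<ge> 0" and g0: "\<And>x. g x \<ge> 0"
  shows "(\<integral>\<^sup>+ x. ennreal (c * f x + g x) \<partial>M) = ennreal c * (\<integral>\<^sup>+ x. ennreal (f x) \<partial>M) + (\<integral>\<^sup>+ x. ennreal (g x) \<partial>M)"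
proof -
  have "(\<integral>\<^sup>+ x. ennreal (c * f x + g x) \<partial>M) = (\<integral>\<^sup>+ x. ennreal c * ennreal (f x) + ennreal (g x) \<partial>M)"
    using c f0 g0 by (simp add: ennreal_plus ennreal_mult)
  also have "\<dots> = (\<integral>\<^sup>+ x. ennreal c * ennreal (f x) \<partial>M) + (\<integral>\<^sup>+ x. ennreal (g x) \<partial>M)"
    by (rule nn_integral_add) (use f g in auto)
  also have "(\<integral>\<^sup>+ x. ennreal c * ennreal (f x) \<partial>M) = ennreal c * (\<integral>\<^sup>+ x. ennreal (f x) \<partial>M)"
    by (rule nn_integral_cmult) (use f in auto)
  finally show ?thesis .
qed


theorem lemmaC2p2:
  fixes M :: "'w measure"
    and D :: "nat \<Rightarrow> 'b measure"
    and \<xi> :: "nat \<Rightarrow> nat \<Rightarrow> nat \<Rightarrow> nat \<Rightarrow> 'w \<Rightarrow> 'b"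
    and Fs :: "nat \<Rightarrow> 'a::euclidean_space \<Rightarrow> 'b \<Rightarrow> real"
    and G :: "nat \<Rightarrow> 'a \<Rightarrow> 'b \<Rightarrow> 'a"
    and F :: "nat \<Rightarrow> 'a \<Rightarrow> real"
    and gradF :: "nat \<Rightarrow> 'a \<Rightarrow> 'a"
    and C :: "nat \<Rightarrow> nat set"
    and N H E :: nat
    and \<gamma> L \<sigma> :: real
    and x0 :: 'a
    and t :: nat
  defines "Cl \<equiv> (\<Union>j<N. C j)"
  assumes N: "N \<ge> 1"
    and C_fin: "\<And>j. j < N \<Longrightarrow> finite (C j)"
    and C_ne: "\<And>j. j < N \<Longrightarrow> C j \<noteq> {}"
    and C_disj: "\<And>j j'. j < N \<Longrightarrow> j' < N \<Longrightarrow> j \<noteq> j' \<Longrightarrow> C j \<inter> C j' = {}"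
    and HE: "H \<ge> 1" "E \<ge> 1"
    and gam: "\<gamma> > 0" "8 * real H * L * \<gamma> \<le> 1"
    \<comment> \<open>probability model: D i is the data distribution of client i\<close>
    and M: "prob_space M"
    and D: "\<And>i. i \<in> Cl \<Longrightarrow> prob_space (D i)"
    \<comment> \<open>samples xi_{i,h}^{t,e} ~ D_i, all mutually independent\<close>
    and xi_dist: "\<And>i t e h. i \<in> Cl \<Longrightarrow> distr M (D i) (\<xi> i t e h) = D i"
    and xi_meas: "\<And>i t e h. i \<in> Cl \<Longrightarrow> \<xi> i t e h \<in> measurable M (D i)"
    and xi_indep: "prob_space.indep_vars M (\<lambda>(i, t, e, h). D i) (\<lambda>(i, t, e, h). \<xi> i t e h)
                     {(i, t, e, h). i \<in> Cl}"
    \<comment> \<open>stochastic losses, their gradients, and the local objectives\<close>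
    and G_meas: "\<And>i. i \<in> Cl \<Longrightarrow> (\<lambda>(x, s). G i x s) \<in> borel_measurable (borel \<Otimes>\<^sub>M D i)"
    and Fs_grad: "\<And>i x s. i \<in> Cl \<Longrightarrow> ((\<lambda>u. Fs i u s) has_derivative (\<lambda>v. G i x s \<bullet> v)) (at x)"
    and F_def: "\<And>i x. i \<in> Cl \<Longrightarrow> integrable (D i) (Fs i x) \<and> F i x = (\<integral>s. Fs i x s \<partial>D i)"
    and F_grad: "\<And>i x. i \<in> Cl \<Longrightarrow> (F i has_derivative (\<lambda>v. gradF i x \<bullet> v)) (at x)"
    \<comment> \<open>(A1)\<close>
    and A1: "\<And>i x y. i \<in> Cl \<Longrightarrow> norm (gradF i x - gradF i y) \<le> L * norm (x - y)"
    \<comment> \<open>(A2)\<close>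
    and A2_unbiased: "\<And>i x. i \<in> Cl \<Longrightarrow> integrable (D i) (G i x) \<and> (\<integral>s. G i x s \<partial>D i) = gradF i x"
    and A2_var: "\<And>i x. i \<in> Cl \<Longrightarrow>
                   (\<integral>\<^sup>+ s. ennreal ((norm (G i x s - gradF i x))\<^sup>2) \<partial>D i) \<le> ennreal (\<sigma>\<^sup>2)"
  shows "Qt M \<xi> G \<gamma> H E N C x0 t
         \<le> ennreal (24 * \<gamma>\<^sup>2 * (real H)\<^sup>2 * L\<^sup>2) * Dt M \<xi> G \<gamma> H E N C x0 t
         + ennreal (12 * \<gamma>\<^sup>2 * (real H)\<^sup>2) *
             (\<Sum>e<E. ennreal (1 / real N) * (\<Sum>j<N. Zj M \<xi> G gradF \<gamma> H E N C x0 t e j))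
         + ennreal (12 * \<gamma>\<^sup>2 * (real H)\<^sup>2) *
             (\<Sum>e<E. ennreal (1 / real N) * (\<Sum>j<N. Yj M \<xi> G gradF \<gamma> H E N C x0 t e j))
         + ennreal (24 * \<gamma>\<^sup>2 * (real H)\<^sup>2) *
             (\<Sum>e<E. Ex M (\<lambda>\<omega>. (norm (grad_f gradF N C (xhat G \<gamma> H E N C x0 (path \<xi> \<omega>) t e)))\<^sup>2))
         + ennreal (3 * real E * real H * \<gamma>\<^sup>2 * \<sigma>\<^sup>2)"
proof -
  interpret P: prob_space M by (rule M)
  have Cl_def': "Cl = (\<Union>j<N. C j)" by (simp add: Cl_def)
  interpret g: gctx N C by unfold_locales (rule C_disj)
  have L0: "L \<ge> 0"
  proof -
    obtain i where i: "i \<in> C 0" using C_ne[of 0] N by auto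
    then have iCl: "i \<in> Cl" using N by (auto simp: Cl_def)
    obtain b :: 'a where b: "b \<noteq> 0" using nonzero_Basis by blast
    have "0 \<le> norm (gradF i b - gradF i 0)" by simp
    also have "\<dots> \<le> L * norm (b - 0)" by (rule A1[OF iCl])
    finally show ?thesis using b by (simp add: zero_le_mult_iff)
  qed
  have gFm: "gradF i \<in> borel_measurable borel" if i: "i \<in> Cl" for i
  proof -
    have "lipschitz_on L UNIV (gradF i)"
      unfolding lipschitz_on_def using A1[OF i] L0 by (simp add: dist_norm)
    then show ?thesis by (intro borel_measurable_continuous_onI lipschitz_on_continuous_on)
  qed
  interpret mM: mctx G D N C M "path \<xi>"
    by unfold_locales (use C_disj G_meas xi_meas in \<open>auto simp: Cl_def path_def\<close>)
  have sumSuc: "nsum G gradF \<gamma> H E N C x0 p t e i (Suc h) = nsum G gradF \<gamma> H E N C x0 p t e i h +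
     (G i (xloc G \<gamma> H E N C x0 p t e i h) (p i t e h) - gradF i (xloc G \<gamma> H E N C x0 p t e i h))" for p i e h
    by (simp add: nsum_def)
  have noise: "Ex M (\<lambda>\<omega>. (norm (nsum G gradF \<gamma> H E N C x0 (path \<xi> \<omega>) t e i h))\<^sup>2) \<le> ennreal (real h * \<sigma>\<^sup>2)"
    if i: "i \<in> Cl" for i e h
  proof (induction h)
    case 0 show ?case by (simp add: nsum_def Ex_def)
  next
    case (Suc h)
    define idx0 where "idx0 = (i, t, e, h)"
    define I where "I = {(i::nat, t::nat, e::nat, h::nat). i \<in> Cl}"
    define J where "J = I - {idx0}"
    define Dm where "Dm = (\<lambda>(i::nat, t::nat, e::nat, h::nat). D i)"
    define Xv where "Xv = (\<lambda>(i::nat, t::nat, e::nat, h::nat). \<xi> i t e h)"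
    define X where "X \<omega> = restrict (\<lambda>k. Xv k \<omega>) J" for \<omega>
    define Y where "Y \<omega> = restrict (\<lambda>k. Xv k \<omega>) {idx0}" for \<omega>
    obtain c where c: "c \<in> space (D i)" using prob_space.not_empty[OF D[OF i]] by blast
    define pr where "pr r = (\<lambda>i' t' e' h'. if (i', t', e', h') = idx0 then c else r (i', t', e', h'))" for r
    have indv: "P.indep_vars Dm Xv I" using xi_indep unfolding Dm_def Xv_def I_def .
    have ind: "P.indep_var (PiM J Dm) X (PiM {idx0} Dm) Y"
      unfolding X_def[abs_def] Y_def[abs_def]
      by (rule P.indep_var_restrict[OF indv]) (auto simp: J_def I_def idx0_def i)
    have pm': "(\<lambda>r. pr r i' t' e' h') \<in> measurable (PiM J Dm) (D i')" if i': "i' \<in> Cl" for i' t' e' h'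
    proof (cases "(i', t', e', h') = idx0")
      case True
      then show ?thesis using c by (simp add: pr_def idx0_def)
    next
      case False
      then have "(i', t', e', h') \<in> J" using i' by (simp add: J_def I_def)
      from measurable_component_singleton[OF this, of Dm] False show ?thesis
        by (simp add: pr_def Dm_def)
    qed
    interpret mP: mctx G D N C "PiM J Dm" pr
      by unfold_locales (use C_disj G_meas pm' in \<open>auto simp: Cl_def\<close>)
    have agr: "pr (X \<omega>) i' t' e' h' = path \<xi> \<omega> i' t' e' h'"
      if "i' \<in> (\<Union>j<N. C j)" "lexlt t' e' h' t e h" for \<omega> i' t' e' h'
    proof -
      have "(i', t', e', h') \<noteq> idx0" using that(2) by (auto simp: idx0_def lexlt_def)
      moreover have "(i', t', e', h') \<in> J" using that calculation by (simp add: J_def I_def Cl_def)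
      ultimately show ?thesis by (simp add: pr_def X_def Xv_def path_def)
    qed
    have iCl: "i \<in> (\<Union>j<N. C j)" using i by (simp add: Cl_def)
    have e1: "nsum G gradF \<gamma> H E N C x0 (path \<xi> \<omega>) t e i h = nsum G gradF \<gamma> H E N C x0 (pr (X \<omega>)) t e i h" for \<omega>
      by (rule g.agree_nsum[OF iCl]) (simp add: agr)
    have e2: "xloc G \<gamma> H E N C x0 (path \<xi> \<omega>) t e i h = xloc G \<gamma> H E N C x0 (pr (X \<omega>)) t e i h" for \<omega>
      by (rule g.agree_xloc[OF iCl]) (simp add: agr)
    have e3: "path \<xi> \<omega> i t e h = (\<lambda>r. r idx0) (Y \<omega>)" for \<omega>
      by (simp add: Y_def Xv_def idx0_def path_def)
    have pim: "(\<lambda>r. r idx0) \<in> measurable (PiM {idx0} Dm) (D i)"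
      using measurable_component_singleton[of idx0 "{idx0}" Dm] by (simp add: Dm_def idx0_def)
    have dY: "distr M (D i) (\<lambda>\<omega>. (\<lambda>r. r idx0) (Y \<omega>)) = D i"
      using xi_dist[OF i, of t e h] by (simp add: Y_def Xv_def idx0_def)
    have Phi: "(\<lambda>r. nsum G gradF \<gamma> H E N C x0 (pr r) t e i h) \<in> borel_measurable (PiM J Dm)"
      by (rule mP.m_nsum[OF iCl]) (rule gFm[OF i])
    have Psi: "(\<lambda>r. xloc G \<gamma> H E N C x0 (pr r) t e i h) \<in> borel_measurable (PiM J Dm)"
      by (rule mP.m_xloc[OF iCl])
    note key = key_indep[OF M D[OF i] ind pim dY Phi Psi
        G_meas[OF i] gFm[OF i] A2_unbiased[OF i] A2_var[OF i]]
    have "Ex M (\<lambda>\<omega>. (norm (nsum G gradF \<gamma> H E N C x0 (path \<xi> \<omega>) t e i (Suc h)))\<^sup>2)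
      = (\<integral>\<^sup>+ \<omega>. ennreal ((norm (nsum G gradF \<gamma> H E N C x0 (pr (X \<omega>)) t e i h +
           (G i (xloc G \<gamma> H E N C x0 (pr (X \<omega>)) t e i h) ((\<lambda>r. r idx0) (Y \<omega>)) -
            gradF i (xloc G \<gamma> H E N C x0 (pr (X \<omega>)) t e i h))))\<^sup>2) \<partial>M)"
      unfolding Ex_def sumSuc e1 e2 e3 ..
    also have "\<dots> \<le> (\<integral>\<^sup>+ \<omega>. ennreal ((norm (nsum G gradF \<gamma> H E N C x0 (pr (X \<omega>)) t e i h))\<^sup>2) \<partial>M) + ennreal (\<sigma>\<^sup>2)"
      by (rule key)
    also have "(\<integral>\<^sup>+ \<omega>. ennreal ((norm (nsum G gradF \<gamma> H E N C x0 (pr (X \<omega>)) t e i h))\<^sup>2) \<partial>M)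
       = Ex M (\<lambda>\<omega>. (norm (nsum G gradF \<gamma> H E N C x0 (path \<xi> \<omega>) t e i h))\<^sup>2)"
      unfolding Ex_def e1 ..
    also have "\<dots> + ennreal (\<sigma>\<^sup>2) \<le> ennreal (real h * \<sigma>\<^sup>2) + ennreal (\<sigma>\<^sup>2)"
      by (rule add_right_mono[OF Suc.IH])
    also have "\<dots> = ennreal (real (Suc h) * \<sigma>\<^sup>2)"
      by (subst ennreal_plus[symmetric]) (auto simp: algebra_simps)
    finally show ?case .
  qed
  have mfj: "(\<lambda>\<omega>. grad_fj gradF C j (f \<omega>)) \<in> borel_measurable M"
    if j: "j < N" and f: "f \<in> borel_measurable M" for j f
  proof -
    have "(\<lambda>\<omega>. gradF i (f \<omega>)) \<in> borel_measurable M" if "i \<in> C j" for i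
      using measurable_compose[OF f gFm] that j by (auto simp: Cl_def)
    then show ?thesis unfolding grad_fj_def by (intro meas_gavg) auto
  qed
  have mf: "(\<lambda>\<omega>. grad_f gradF N C (f \<omega>)) \<in> borel_measurable M"
    if f: "f \<in> borel_measurable M" for f
    unfolding grad_f_def by (intro meas_gmean mfj f)
  define a1 where "a1 = 12 * \<gamma>\<^sup>2 * (real H)\<^sup>2"
  define a2 where "a2 = 24 * \<gamma>\<^sup>2 * (real H)\<^sup>2 * L\<^sup>2"
  define a4 where "a4 = 24 * \<gamma>\<^sup>2 * (real H)\<^sup>2"
  define a5 where "a5 = 3 * real H * \<gamma>\<^sup>2 * \<sigma>\<^sup>2"
  have perI: "(\<Sum>h<H. Ex M (\<lambda>\<omega>. (norm (xbj G \<gamma> H E N C x0 (path \<xi> \<omega>) t e j - xloc G \<gamma> H E N C x0 (path \<xi> \<omega>) t e i h))\<^sup>2))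
     \<le> ennreal (real H) * (ennreal a1 * Ex M (\<lambda>\<omega>. (norm (zv G \<gamma> H E N C x0 (path \<xi> \<omega>) t e i
                 + gradF i (xbj G \<gamma> H E N C x0 (path \<xi> \<omega>) t e j)
                 - grad_fj gradF C j (xbj G \<gamma> H E N C x0 (path \<xi> \<omega>) t e j)))\<^sup>2)
        + (ennreal a2 * Ex M (\<lambda>\<omega>. (norm (xhat G \<gamma> H E N C x0 (path \<xi> \<omega>) t e - xbj G \<gamma> H E N C x0 (path \<xi> \<omega>) t e j))\<^sup>2)
         + ennreal a1 * Yj M \<xi> G gradF \<gamma> H E N C x0 t e j
         + ennreal a4 * Ex M (\<lambda>\<omega>. (norm (grad_f gradF N C (xhat G \<gamma> H E N C x0 (path \<xi> \<omega>) t e)))\<^sup>2)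
         + ennreal a5))"
    if j: "j < N" and i: "i \<in> C j" for e j i
  proof -
    have iCl: "i \<in> Cl" using i j by (auto simp: Cl_def)
    have iU: "i \<in> (\<Union>j<N. C j)" using i j by auto
    have gi: "grp N C i = j" by (rule grp_eq[of N C, OF C_disj j i])
    define xb where "xb \<omega> = xbj G \<gamma> H E N C x0 (path \<xi> \<omega>) t e j" for \<omega>
    define x where "x k \<omega> = xloc G \<gamma> H E N C x0 (path \<xi> \<omega>) t e i k" for k \<omega>
    define z where "z \<omega> = zv G \<gamma> H E N C x0 (path \<xi> \<omega>) t e i" for \<omega>
    define y where "y \<omega> = yv G \<gamma> H E N C x0 (path \<xi> \<omega>) t j" for \<omega>
    define xh where "xh \<omega> = xhat G \<gamma> H E N C x0 (path \<xi> \<omega>) t e" for \<omega>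
    define nsm where "nsm h \<omega> = nsum G gradF \<gamma> H E N C x0 (path \<xi> \<omega>) t e i h" for h \<omega>
    define B1 where "B1 \<omega> = z \<omega> + gradF i (xb \<omega>) - grad_fj gradF C j (xb \<omega>)" for \<omega>
    define B3 where "B3 \<omega> = y \<omega> + grad_fj gradF C j (xh \<omega>) - grad_f gradF N C (xh \<omega>)" for \<omega>
    define B4 where "B4 \<omega> = grad_f gradF N C (xh \<omega>)" for \<omega>
    define Dd where "Dd \<omega> = xh \<omega> - xb \<omega>" for \<omega>
    define c0 where "c0 = 32/15 * \<gamma>\<^sup>2"
    have pw: "(\<Sum>h<H. (norm (xb \<omega> - x h \<omega>))\<^sup>2) \<le> c0 * (\<Sum>h<H. (norm (nsm h \<omega>))\<^sup>2)
       + ((real H * a1) * (norm (B1 \<omega>))\<^sup>2 + ((real H * a2) * (norm (Dd \<omega>))\<^sup>2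
       + ((real H * a1) * (norm (B3 \<omega>))\<^sup>2 + (real H * a4) * (norm (B4 \<omega>))\<^sup>2)))" for \<omega>
    proof -
      define n where "n k = G i (x k \<omega>) (\<xi> i t e k \<omega>) - gradF i (x k \<omega>)" for k
      have xdef: "x h \<omega> = xb \<omega> - \<gamma> *\<^sub>R (\<Sum>k<h. n k + gradF i (x k \<omega>) + (z \<omega> + y \<omega>))" for h
      proof -
        have "x h \<omega> = xb \<omega> - \<gamma> *\<^sub>R (\<Sum>k<h. G i (x k \<omega>) (path \<xi> \<omega> i t e k) + z \<omega> + y \<omega>)"
          unfolding x_def xloc_def xb_def z_def y_def gi by (rule li_closed)
        also have "\<dots> = xb \<omega> - \<gamma> *\<^sub>R (\<Sum>k<h. n k + gradF i (x k \<omega>) + (z \<omega> + y \<omega>))"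
          by (simp add: n_def path_def algebra_simps)
        finally show ?thesis .
      qed
      have P: "(\<Sum>h<H. (norm (xb \<omega> - x h \<omega>))\<^sup>2) \<le> 32/15 * \<gamma>\<^sup>2 * (\<Sum>h<H. (norm (\<Sum>k<h. n k))\<^sup>2)
          + 64/45 * \<gamma>\<^sup>2 * (real H)^3 * (norm ((z \<omega> + y \<omega>) + gradF i (xb \<omega>)))\<^sup>2"
        by (rule path_main[where x="\<lambda>k. x k \<omega>", OF xdef A1[OF iCl] L0 gam])
      have ns: "(\<Sum>k<h. n k) = nsm h \<omega>" for h by (simp add: n_def nsm_def nsum_def path_def x_def)
      have Bs: "(z \<omega> + y \<omega>) + gradF i (xb \<omega>) = B1 \<omega> + (grad_fj gradF C j (xb \<omega>) - grad_fj gradF C j (xh \<omega>)) + B3 \<omega> + B4 \<omega>"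
        by (simp add: B1_def B3_def B4_def algebra_simps)
      have q4: "(norm ((z \<omega> + y \<omega>) + gradF i (xb \<omega>)))\<^sup>2 \<le> 4 * ((norm (B1 \<omega>))\<^sup>2
          + (norm (grad_fj gradF C j (xb \<omega>) - grad_fj gradF C j (xh \<omega>)))\<^sup>2 + (norm (B3 \<omega>))\<^sup>2 + (norm (B4 \<omega>))\<^sup>2)"
        unfolding Bs by (rule sq_add4)
      have "norm (grad_fj gradF C j (xb \<omega>) - grad_fj gradF C j (xh \<omega>)) \<le> L * norm (xb \<omega> - xh \<omega>)"
        by (rule lip_fj[of C j, OF C_fin[OF j] C_ne[OF j]]) (rule A1, use j in \<open>auto simp: Cl_def\<close>)
      then have "(norm (grad_fj gradF C j (xb \<omega>) - grad_fj gradF C j (xh \<omega>)))\<^sup>2 \<le> (L * norm (xb \<omega> - xh \<omega>))\<^sup>2"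
        by (rule power_mono[OF _ norm_ge_zero])
      also have "\<dots> = L\<^sup>2 * (norm (Dd \<omega>))\<^sup>2" by (simp add: Dd_def power_mult_distrib norm_minus_commute)
      finally have b2: "(norm (grad_fj gradF C j (xb \<omega>) - grad_fj gradF C j (xh \<omega>)))\<^sup>2 \<le> L\<^sup>2 * (norm (Dd \<omega>))\<^sup>2" .
      define K where "K = 64/45 * \<gamma>\<^sup>2 * (real H)^3"
      have K0: "K \<ge> 0" by (simp add: K_def)
      have KQ: "K * (norm ((z \<omega> + y \<omega>) + gradF i (xb \<omega>)))\<^sup>2 \<le> K * (4 * ((norm (B1 \<omega>))\<^sup>2 + L\<^sup>2 * (norm (Dd \<omega>))\<^sup>2 + (norm (B3 \<omega>))\<^sup>2 + (norm (B4 \<omega>))\<^sup>2))"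
        using q4 b2 K0 by (intro mult_left_mono) auto
      have H3: "(real H)^3 = real H * (real H)\<^sup>2" by (simp add: power2_eq_square power3_eq_cube)
      have k1: "(4 * K) * (norm (B1 \<omega>))\<^sup>2 \<le> (real H * a1) * (norm (B1 \<omega>))\<^sup>2"
        by (rule mult_right_mono) (auto simp: K_def a1_def H3)
      have k3: "(4 * K) * (norm (B3 \<omega>))\<^sup>2 \<le> (real H * a1) * (norm (B3 \<omega>))\<^sup>2"
        by (rule mult_right_mono) (auto simp: K_def a1_def H3)
      have k4: "(4 * K) * (norm (B4 \<omega>))\<^sup>2 \<le> (real H * a4) * (norm (B4 \<omega>))\<^sup>2"
        by (rule mult_right_mono) (auto simp: K_def a4_def H3)
      have k2: "(4 * K * L\<^sup>2) * (norm (Dd \<omega>))\<^sup>2 \<le> (real H * a2) * (norm (Dd \<omega>))\<^sup>2"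
        by (rule mult_right_mono) (auto simp: K_def a2_def H3)
      have "K * (4 * ((norm (B1 \<omega>))\<^sup>2 + L\<^sup>2 * (norm (Dd \<omega>))\<^sup>2 + (norm (B3 \<omega>))\<^sup>2 + (norm (B4 \<omega>))\<^sup>2))
          = (4 * K) * (norm (B1 \<omega>))\<^sup>2 + (4 * K * L\<^sup>2) * (norm (Dd \<omega>))\<^sup>2 + (4 * K) * (norm (B3 \<omega>))\<^sup>2 + (4 * K) * (norm (B4 \<omega>))\<^sup>2"
        by (simp add: algebra_simps)
      then show ?thesis using P KQ k1 k2 k3 k4 unfolding ns c0_def K_def[symmetric] by linarith
    qed
    have mxb[measurable]: "xb \<in> borel_measurable M" unfolding xb_def[abs_def] by (rule mM.m_xbj[OF j])
    have mx[measurable]: "x k \<in> borel_measurable M" for k unfolding x_def[abs_def] by (rule mM.m_xloc[OF iU])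
    have mz[measurable]: "z \<in> borel_measurable M" unfolding z_def[abs_def] by (rule mM.m_zv[OF iU])
    have my[measurable]: "y \<in> borel_measurable M" unfolding y_def[abs_def] by (rule mM.m_yv[OF j])
    have mxh[measurable]: "xh \<in> borel_measurable M" unfolding xh_def[abs_def] by (rule mM.m_xhat)
    have mn[measurable]: "nsm h \<in> borel_measurable M" for h
      unfolding nsm_def[abs_def] by (rule mM.m_nsum[OF iU]) (rule gFm[OF iCl])
    have mgx[measurable]: "(\<lambda>\<omega>. gradF i (xb \<omega>)) \<in> borel_measurable M"
      by (rule measurable_compose[OF mxb gFm[OF iCl]])
    have mfx[measurable]: "(\<lambda>\<omega>. grad_fj gradF C j (xb \<omega>)) \<in> borel_measurable M" by (rule mfj[OF j mxb])
    have mfh[measurable]: "(\<lambda>\<omega>. grad_fj gradF C j (xh \<omega>)) \<in> borel_measurable M" by (rule mfj[OF j mxh])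
    have mff[measurable]: "(\<lambda>\<omega>. grad_f gradF N C (xh \<omega>)) \<in> borel_measurable M" by (rule mf[OF mxh])
    have mB1[measurable]: "B1 \<in> borel_measurable M" unfolding B1_def[abs_def] by measurable
    have mB3[measurable]: "B3 \<in> borel_measurable M" unfolding B3_def[abs_def] by measurable
    have mB4[measurable]: "B4 \<in> borel_measurable M" unfolding B4_def[abs_def] by measurable
    have mDd[measurable]: "Dd \<in> borel_measurable M" unfolding Dd_def[abs_def] by measurable
    have nb: "ennreal c0 * (\<integral>\<^sup>+ \<omega>. ennreal (\<Sum>h<H. (norm (nsm h \<omega>))\<^sup>2) \<partial>M) \<le> ennreal (real H * a5)"
    proof -
      have "(\<integral>\<^sup>+ \<omega>. ennreal (\<Sum>h<H. (norm (nsm h \<omega>))\<^sup>2) \<partial>M) = (\<integral>\<^sup>+ \<omega>. (\<Sum>h<H. ennreal ((norm (nsm h \<omega>))\<^sup>2)) \<partial>M)"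
        by (simp add: sum_ennreal)
      also have "\<dots> = (\<Sum>h<H. Ex M (\<lambda>\<omega>. (norm (nsm h \<omega>))\<^sup>2))"
        unfolding Ex_def by (rule nn_integral_sum) measurable
      also have "\<dots> \<le> (\<Sum>h<H. ennreal (real h * \<sigma>\<^sup>2))"
        by (rule sum_mono) (unfold nsm_def, rule noise[OF iCl])
      also have "\<dots> = ennreal (\<Sum>h<H. real h * \<sigma>\<^sup>2)" by (simp add: sum_ennreal)
      finally have 1: "(\<integral>\<^sup>+ \<omega>. ennreal (\<Sum>h<H. (norm (nsm h \<omega>))\<^sup>2) \<partial>M) \<le> ennreal (\<Sum>h<H. real h * \<sigma>\<^sup>2)" .
      have sb: "(\<Sum>h<H. real h) \<le> real H * real H"
        using sum_bounded_above[of "{..<H}" "\<lambda>h. real h" "real H"] by simp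
      have "c0 * (\<Sum>h<H. real h * \<sigma>\<^sup>2) = c0 * \<sigma>\<^sup>2 * (\<Sum>h<H. real h)"
        by (simp add: sum_distrib_right[symmetric] mult_ac)
      also have "\<dots> \<le> c0 * \<sigma>\<^sup>2 * (real H * real H)"
        by (rule mult_left_mono[OF sb]) (simp add: c0_def)
      also have "\<dots> \<le> real H * a5"
      proof -
        have q: "0 \<le> \<gamma>\<^sup>2 * \<sigma>\<^sup>2 * (real H * real H)" by simp
        have "c0 * \<sigma>\<^sup>2 * (real H * real H) = (32/15) * (\<gamma>\<^sup>2 * \<sigma>\<^sup>2 * (real H * real H))" by (simp add: c0_def)
        also have "\<dots> \<le> 3 * (\<gamma>\<^sup>2 * \<sigma>\<^sup>2 * (real H * real H))" by (rule mult_right_mono[OF _ q]) simp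
        also have "\<dots> = real H * a5" by (simp add: a5_def)
        finally show ?thesis .
      qed
      finally have 2: "c0 * (\<Sum>h<H. real h * \<sigma>\<^sup>2) \<le> real H * a5" .
      have "ennreal c0 * (\<integral>\<^sup>+ \<omega>. ennreal (\<Sum>h<H. (norm (nsm h \<omega>))\<^sup>2) \<partial>M) \<le> ennreal c0 * ennreal (\<Sum>h<H. real h * \<sigma>\<^sup>2)"
        by (rule mult_left_mono[OF 1]) simp
      also have "\<dots> = ennreal (c0 * (\<Sum>h<H. real h * \<sigma>\<^sup>2))"
        by (rule ennreal_mult[symmetric]) (simp_all add: c0_def sum_nonneg)
      also have "\<dots> \<le> ennreal (real H * a5)" by (rule ennreal_leI[OF 2])
      finally show ?thesis .
    qed
    have "(\<Sum>h<H. Ex M (\<lambda>\<omega>. (norm (xb \<omega> - x h \<omega>))\<^sup>2)) = (\<integral>\<^sup>+ \<omega>. (\<Sum>h<H. ennreal ((norm (xb \<omega> - x h \<omega>))\<^sup>2)) \<partial>M)"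
      unfolding Ex_def by (rule nn_integral_sum[symmetric]) measurable
    also have "\<dots> = (\<integral>\<^sup>+ \<omega>. ennreal (\<Sum>h<H. (norm (xb \<omega> - x h \<omega>))\<^sup>2) \<partial>M)"
      by (simp add: sum_ennreal)
    also have "\<dots> \<le> (\<integral>\<^sup>+ \<omega>. ennreal (c0 * (\<Sum>h<H. (norm (nsm h \<omega>))\<^sup>2)
       + ((real H * a1) * (norm (B1 \<omega>))\<^sup>2 + ((real H * a2) * (norm (Dd \<omega>))\<^sup>2
       + ((real H * a1) * (norm (B3 \<omega>))\<^sup>2 + (real H * a4) * (norm (B4 \<omega>))\<^sup>2)))) \<partial>M)"
      by (intro nn_integral_mono ennreal_leI pw)
    also have "\<dots> = ennreal c0 * (\<integral>\<^sup>+ \<omega>. ennreal (\<Sum>h<H. (norm (nsm h \<omega>))\<^sup>2) \<partial>M)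
       + (ennreal (real H * a1) * Ex M (\<lambda>\<omega>. (norm (B1 \<omega>))\<^sup>2) + (ennreal (real H * a2) * Ex M (\<lambda>\<omega>. (norm (Dd \<omega>))\<^sup>2)
       + (ennreal (real H * a1) * Ex M (\<lambda>\<omega>. (norm (B3 \<omega>))\<^sup>2) + ennreal (real H * a4) * Ex M (\<lambda>\<omega>. (norm (B4 \<omega>))\<^sup>2))))"
    proof -
      have nn: "0 \<le> a1" "0 \<le> a2" "0 \<le> a4" "0 \<le> c0" by (simp_all add: a1_def a2_def a4_def c0_def)
      have l4: "(\<integral>\<^sup>+ \<omega>. ennreal ((real H * a1) * (norm (B3 \<omega>))\<^sup>2 + (real H * a4) * (norm (B4 \<omega>))\<^sup>2) \<partial>M)
        = ennreal (real H * a1) * Ex M (\<lambda>\<omega>. (norm (B3 \<omega>))\<^sup>2) + ennreal (real H * a4) * Ex M (\<lambda>\<omega>. (norm (B4 \<omega>))\<^sup>2)"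
        unfolding Ex_def
        by (subst nn_int_lin; (measurable)?; (simp add: nn)?) (subst nn_integral_cmult[symmetric]; (measurable)?; simp add: nn ennreal_mult)
      have l3: "(\<integral>\<^sup>+ \<omega>. ennreal ((real H * a2) * (norm (Dd \<omega>))\<^sup>2 + ((real H * a1) * (norm (B3 \<omega>))\<^sup>2 + (real H * a4) * (norm (B4 \<omega>))\<^sup>2)) \<partial>M)
        = ennreal (real H * a2) * Ex M (\<lambda>\<omega>. (norm (Dd \<omega>))\<^sup>2) + (\<integral>\<^sup>+ \<omega>. ennreal ((real H * a1) * (norm (B3 \<omega>))\<^sup>2 + (real H * a4) * (norm (B4 \<omega>))\<^sup>2) \<partial>M)"
        unfolding Ex_def by (rule nn_int_lin; (measurable)?; simp add: nn)
      have l2: "(\<integral>\<^sup>+ \<omega>. ennreal ((real H * a1) * (norm (B1 \<omega>))\<^sup>2 + ((real H * a2) * (norm (Dd \<omega>))\<^sup>2 + ((real H * a1) * (norm (B3 \<omega>))\<^sup>2 + (real H * a4) * (norm (B4 \<omega>))\<^sup>2))) \<partial>M)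
        = ennreal (real H * a1) * Ex M (\<lambda>\<omega>. (norm (B1 \<omega>))\<^sup>2) + (\<integral>\<^sup>+ \<omega>. ennreal ((real H * a2) * (norm (Dd \<omega>))\<^sup>2 + ((real H * a1) * (norm (B3 \<omega>))\<^sup>2 + (real H * a4) * (norm (B4 \<omega>))\<^sup>2)) \<partial>M)"
        unfolding Ex_def by (rule nn_int_lin; (measurable)?; simp add: nn)
      have l1: "(\<integral>\<^sup>+ \<omega>. ennreal (c0 * (\<Sum>h<H. (norm (nsm h \<omega>))\<^sup>2)
       + ((real H * a1) * (norm (B1 \<omega>))\<^sup>2 + ((real H * a2) * (norm (Dd \<omega>))\<^sup>2
       + ((real H * a1) * (norm (B3 \<omega>))\<^sup>2 + (real H * a4) * (norm (B4 \<omega>))\<^sup>2)))) \<partial>M)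
        = ennreal c0 * (\<integral>\<^sup>+ \<omega>. ennreal (\<Sum>h<H. (norm (nsm h \<omega>))\<^sup>2) \<partial>M) + (\<integral>\<^sup>+ \<omega>. ennreal ((real H * a1) * (norm (B1 \<omega>))\<^sup>2 + ((real H * a2) * (norm (Dd \<omega>))\<^sup>2 + ((real H * a1) * (norm (B3 \<omega>))\<^sup>2 + (real H * a4) * (norm (B4 \<omega>))\<^sup>2))) \<partial>M)"
        by (rule nn_int_lin; (measurable)?; simp add: nn sum_nonneg)
      show ?thesis unfolding l1 l2 l3 l4 ..
    qed
    also have "ennreal c0 * (\<integral>\<^sup>+ \<omega>. ennreal (\<Sum>h<H. (norm (nsm h \<omega>))\<^sup>2) \<partial>M) + (ennreal (real H * a1) * Ex M (\<lambda>\<omega>. (norm (B1 \<omega>))\<^sup>2) + (ennreal (real H * a2) * Ex M (\<lambda>\<omega>. (norm (Dd \<omega>))\<^sup>2)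
       + (ennreal (real H * a1) * Ex M (\<lambda>\<omega>. (norm (B3 \<omega>))\<^sup>2) + ennreal (real H * a4) * Ex M (\<lambda>\<omega>. (norm (B4 \<omega>))\<^sup>2))))
      \<le> ennreal (real H * a5) + (ennreal (real H * a1) * Ex M (\<lambda>\<omega>. (norm (B1 \<omega>))\<^sup>2) + (ennreal (real H * a2) * Ex M (\<lambda>\<omega>. (norm (Dd \<omega>))\<^sup>2)
       + (ennreal (real H * a1) * Ex M (\<lambda>\<omega>. (norm (B3 \<omega>))\<^sup>2) + ennreal (real H * a4) * Ex M (\<lambda>\<omega>. (norm (B4 \<omega>))\<^sup>2))))"
      by (rule add_right_mono[OF nb])
    also have "ennreal (real H * a5) + (ennreal (real H * a1) * Ex M (\<lambda>\<omega>. (norm (B1 \<omega>))\<^sup>2) + (ennreal (real H * a2) * Ex M (\<lambda>\<omega>. (norm (Dd \<omega>))\<^sup>2)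
       + (ennreal (real H * a1) * Ex M (\<lambda>\<omega>. (norm (B3 \<omega>))\<^sup>2) + ennreal (real H * a4) * Ex M (\<lambda>\<omega>. (norm (B4 \<omega>))\<^sup>2))))
      = ennreal (real H) * (ennreal a1 * Ex M (\<lambda>\<omega>. (norm (B1 \<omega>))\<^sup>2)
        + (ennreal a2 * Ex M (\<lambda>\<omega>. (norm (Dd \<omega>))\<^sup>2)
         + ennreal a1 * Ex M (\<lambda>\<omega>. (norm (B3 \<omega>))\<^sup>2)
         + ennreal a4 * Ex M (\<lambda>\<omega>. (norm (B4 \<omega>))\<^sup>2)
         + ennreal a5))"
      by (simp add: ennreal_mult a1_def a2_def a4_def a5_def distrib_left mult.assoc add_ac)
    finally show ?thesis
      unfolding xb_def x_def B1_def z_def Dd_def xh_def Yj_def B3_def y_def B4_def .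
  qed
  define Dej where "Dej e j = Ex M (\<lambda>\<omega>. (norm (xhat G \<gamma> H E N C x0 (path \<xi> \<omega>) t e - xbj G \<gamma> H E N C x0 (path \<xi> \<omega>) t e j))\<^sup>2)" for e j
  define Fe where "Fe e = Ex M (\<lambda>\<omega>. (norm (grad_f gradF N C (xhat G \<gamma> H E N C x0 (path \<xi> \<omega>) t e)))\<^sup>2)" for e
  define Qi where "Qi e j i = (\<Sum>h<H. Ex M (\<lambda>\<omega>. (norm (xbj G \<gamma> H E N C x0 (path \<xi> \<omega>) t e j - xloc G \<gamma> H E N C x0 (path \<xi> \<omega>) t e i h))\<^sup>2))" for e j i
  define EB1 where "EB1 e j i = Ex M (\<lambda>\<omega>. (norm (zv G \<gamma> H E N C x0 (path \<xi> \<omega>) t e i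
                 + gradF i (xbj G \<gamma> H E N C x0 (path \<xi> \<omega>) t e j)
                 - grad_fj gradF C j (xbj G \<gamma> H E N C x0 (path \<xi> \<omega>) t e j)))\<^sup>2)" for e j i
  define Yv where "Yv e j = Yj M \<xi> G gradF \<gamma> H E N C x0 t e j" for e j
  define Zv where "Zv e j = Zj M \<xi> G gradF \<gamma> H E N C x0 t e j" for e j
  define R where "R e j = ennreal a2 * Dej e j + ennreal a1 * Yv e j + ennreal a4 * Fe e + ennreal a5" for e j
  have perI': "Qi e j i \<le> ennreal (real H) * (ennreal a1 * EB1 e j i + R e j)" if "j < N" "i \<in> C j" for e j i
    unfolding Qi_def EB1_def R_def Dej_def Yv_def Fe_def using perI[OF that] by (simp add: add.assoc)
  have perJ: "ennreal (1 / real (card (C j))) * (\<Sum>i\<in>C j. Qi e j i) \<le> ennreal (real H) * (ennreal a1 * Zv e j + R e j)"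
    if j: "j < N" for e j
  proof -
    define u where "u = ennreal (1 / real (card (C j)))"
    have cpos: "card (C j) > 0" using C_fin[OF j] C_ne[OF j] by (simp add: card_gt_0_iff)
    have u1: "u * of_nat (card (C j)) = 1"
      using cpos by (simp add: u_def ennreal_of_nat_eq_real_of_nat ennreal_mult[symmetric])
    have "(\<Sum>i\<in>C j. Qi e j i) \<le> (\<Sum>i\<in>C j. ennreal (real H) * (ennreal a1 * EB1 e j i + R e j))"
      by (rule sum_mono) (rule perI'[OF j])
    also have "\<dots> = ennreal (real H) * (ennreal a1 * (\<Sum>i\<in>C j. EB1 e j i) + of_nat (card (C j)) * R e j)"
      by (simp add: sum_distrib_left[symmetric] sum.distrib)
    finally have 1: "u * (\<Sum>i\<in>C j. Qi e j i) \<le> u * (ennreal (real H) * (ennreal a1 * (\<Sum>i\<in>C j. EB1 e j i) + of_nat (card (C j)) * R e j))"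
      by (rule mult_left_mono) simp
    have "u * (ennreal (real H) * (ennreal a1 * (\<Sum>i\<in>C j. EB1 e j i) + of_nat (card (C j)) * R e j))
        = ennreal (real H) * (ennreal a1 * (u * (\<Sum>i\<in>C j. EB1 e j i)) + (u * of_nat (card (C j))) * R e j)"
      by (simp add: algebra_simps)
    also have "\<dots> = ennreal (real H) * (ennreal a1 * Zv e j + R e j)"
      unfolding u1 mult_1 by (simp add: Zv_def Zj_def u_def EB1_def)
    finally show ?thesis using 1 by (simp add: u_def)
  qed
  have Npos: "real N > 0" using N by simp
  have Hpos: "real H > 0" using HE by simp
  have wN: "ennreal (1 / real N) * of_nat N = 1"
    using Npos by (simp add: ennreal_of_nat_eq_real_of_nat ennreal_mult[symmetric])
  have vH: "ennreal (1 / (real N * real H)) * ennreal (real H) = ennreal (1 / real N)"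
    using Npos Hpos by (simp add: ennreal_mult[symmetric])
  define T where "T e = ennreal a2 * (ennreal (1 / real N) * (\<Sum>j<N. Dej e j))
      + ennreal a1 * (ennreal (1 / real N) * (\<Sum>j<N. Zv e j))
      + ennreal a1 * (ennreal (1 / real N) * (\<Sum>j<N. Yv e j))
      + ennreal a4 * Fe e + ennreal a5" for e
  have perE: "ennreal (1 / (real N * real H)) * (\<Sum>j<N. ennreal (1 / real (card (C j))) * (\<Sum>i\<in>C j. Qi e j i)) \<le> T e" for e
  proof -
    define v where "v = ennreal (1 / (real N * real H))"
    define w where "w = ennreal (1 / real N)"
    have "(\<Sum>j<N. ennreal (1 / real (card (C j))) * (\<Sum>i\<in>C j. Qi e j i)) \<le> (\<Sum>j<N. ennreal (real H) * (ennreal a1 * Zv e j + R e j))"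
      by (rule sum_mono) (rule perJ, simp)
    also have "\<dots> = ennreal (real H) * (\<Sum>j<N. ennreal a1 * Zv e j + R e j)"
      by (simp add: sum_distrib_left)
    also have "(\<Sum>j<N. ennreal a1 * Zv e j + R e j) = ennreal a1 * (\<Sum>j<N. Zv e j) + ennreal a2 * (\<Sum>j<N. Dej e j)
        + ennreal a1 * (\<Sum>j<N. Yv e j) + of_nat N * (ennreal a4 * Fe e + ennreal a5)"
      by (simp add: R_def sum.distrib sum_distrib_left algebra_simps)
    finally have 1: "v * (\<Sum>j<N. ennreal (1 / real (card (C j))) * (\<Sum>i\<in>C j. Qi e j i)) \<le>
       v * (ennreal (real H) * (ennreal a1 * (\<Sum>j<N. Zv e j) + ennreal a2 * (\<Sum>j<N. Dej e j)
        + ennreal a1 * (\<Sum>j<N. Yv e j) + of_nat N * (ennreal a4 * Fe e + ennreal a5)))"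
      by (rule mult_left_mono) simp
    have "v * (ennreal (real H) * (ennreal a1 * (\<Sum>j<N. Zv e j) + ennreal a2 * (\<Sum>j<N. Dej e j)
        + ennreal a1 * (\<Sum>j<N. Yv e j) + of_nat N * (ennreal a4 * Fe e + ennreal a5)))
      = (v * ennreal (real H)) * (ennreal a1 * (\<Sum>j<N. Zv e j) + ennreal a2 * (\<Sum>j<N. Dej e j)
        + ennreal a1 * (\<Sum>j<N. Yv e j) + of_nat N * (ennreal a4 * Fe e + ennreal a5))"
      by (simp add: mult.assoc)
    also have "\<dots> = w * (ennreal a1 * (\<Sum>j<N. Zv e j) + ennreal a2 * (\<Sum>j<N. Dej e j)
        + ennreal a1 * (\<Sum>j<N. Yv e j) + of_nat N * (ennreal a4 * Fe e + ennreal a5))"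
      unfolding v_def w_def vH ..
    also have "\<dots> = ennreal a2 * (w * (\<Sum>j<N. Dej e j)) + ennreal a1 * (w * (\<Sum>j<N. Zv e j))
        + ennreal a1 * (w * (\<Sum>j<N. Yv e j)) + (w * of_nat N) * (ennreal a4 * Fe e + ennreal a5)"
      by (simp add: algebra_simps)
    also have "\<dots> = T e" unfolding w_def wN by (simp add: T_def add.assoc)
    finally show ?thesis using 1 by (simp add: v_def)
  qed
  have "Qt M \<xi> G \<gamma> H E N C x0 t = (\<Sum>e<E. ennreal (1 / (real N * real H)) * (\<Sum>j<N. ennreal (1 / real (card (C j))) * (\<Sum>i\<in>C j. Qi e j i)))"
    unfolding Qt_def Qi_def ..
  also have "\<dots> \<le> (\<Sum>e<E. T e)" by (rule sum_mono[OF perE])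
  also have "\<dots> = ennreal a2 * Dt M \<xi> G \<gamma> H E N C x0 t
      + ennreal a1 * (\<Sum>e<E. ennreal (1 / real N) * (\<Sum>j<N. Zv e j))
      + ennreal a1 * (\<Sum>e<E. ennreal (1 / real N) * (\<Sum>j<N. Yv e j))
      + ennreal a4 * (\<Sum>e<E. Fe e) + of_nat E * ennreal a5"
    unfolding T_def Dt_def Dej_def by (simp add: sum.distrib sum_distrib_left)
  also have "of_nat E * ennreal a5 = ennreal (3 * real E * real H * \<gamma>\<^sup>2 * \<sigma>\<^sup>2)"
    by (simp add: a5_def ennreal_of_nat_eq_real_of_nat ennreal_mult[symmetric] mult_ac)
  finally show ?thesis unfolding a1_def a2_def a4_def Zv_def Yv_def Fe_def .
qed

end
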